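(* For every $n\ge1$, $$\mathrm{SH}_n=\sum_{\lambda\vdash n}\frac{2^{\ell(\lambda)}\,n(n-1)\cdots(n-\ell(\lambda)+2)}{m_1!\,m_2!\cdots m_n!}\,V_\lambda,$$ where the sum is over all partitions $\lambda$ of $n$, $\ell(\lambda)$ is the number of parts, $m_i$ is the number of parts equal to $i$, the product $n(n-1)\cdots(n-\ell(\lambda)+2)$ has $\ell(\lambda)-1$ factors (empty product $=1$ when $\ell(\lambda)=1$), and $V_\lambda=P_{\lambda_1}P_{\lambda_2}\cdots$.
   Context: Work in the ring $\Lambda_{\mathbb Q}$ of symmetric functions with rational coefficients in variables $x=(x_1,x_2,\dots)$; $p_k$ denotes the power sum. For $f\in\Lambda_{\mathbb Q}$, its shiftification $f(x/x)$ is obtained by writing $f$ as a polynomial in the power sums and substituting $p_{2i+1}\mapsto 2p_{2i+1}$ and $p_{2i}\mapsto 0$ for all $i\ge1$. A parking function of length $n$ is a sequence $(a_1,\dots,a_n)$ of positive integers whose weakly increasing rearrangement $b_1\le\cdots\le b_n$ satisfies $b_i\le i$ for all $i$. The symmetric group $S_n$ acts on the set of parking functions of length $n$ by permuting coordinates; $\mathrm{PF}_n$ denotes the Frobenius characteristic of this permutation representation ($\mathrm{PF}_0=1$). Define $\mathrm{SH}_n(x)=\mathrm{PF}_n(x/x)$. The one-row Schur $P$-functions $P_n$ are defined by $1+2\sum_{n\ge1}P_n(x)t^n=\prod_i\frac{1+x_it}{1-x_it}$. For any partition $\lambda$, $V_\lambda=P_{\lambda_1}P_{\lambda_2}\cdots$.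 *)

theory Defs
  imports "HOL-Combinatorics.Orbits" "HOL-Combinatorics.Permutations"
          "HOL-Library.Multiset" "HOL-Computational_Algebra.Formal_Power_Series"
begin

(* Symmetric functions are realised by evaluation at x_1..x_N (indices 0..N-1),
   for every finite N and every real point x. A homogeneous degree-n identity in
   Lambda_Q holds iff it holds for all such evaluations. *)

definition partitions :: "nat \<Rightarrow> nat multiset set" where
  "partitions n = {la. set_mset la \<subseteq> {1..} \<and> sum_mset la = n}"

definition psum :: "nat \<Rightarrow> (nat \<Rightarrow> real) \<Rightarrow> nat \<Rightarrow> real" where
  "psum N x k = (\<Sum>i<N. x i ^ k)"

definition pmono :: "nat \<Rightarrow> (nat \<Rightarrow> real) \<Rightarrow> nat multiset \<Rightarrow> real" where
  "pmono N x \<mu> = (\<Prod>k\<in>#\<mu>. psum N x k)"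

definition pmono_shift :: "nat \<Rightarrow> (nat \<Rightarrow> real) \<Rightarrow> nat multiset \<Rightarrow> real" where
  "pmono_shift N x \<mu> = (\<Prod>k\<in>#\<mu>. (if odd k then 2 * psum N x k else 0))"

definition parking_functions :: "nat \<Rightarrow> nat list set" where
  "parking_functions n = {a. length a = n \<and> (\<forall>i<n. 1 \<le> a ! i) \<and>
                              (\<forall>i<n. sort a ! i \<le> i + 1)}"

definition cycle_type :: "nat \<Rightarrow> (nat \<Rightarrow> nat) \<Rightarrow> nat multiset" where
  "cycle_type n \<sigma> = image_mset card (mset_set {orbit \<sigma> i | i. i < n})"

definition pf_fix :: "nat \<Rightarrow> (nat \<Rightarrow> nat) \<Rightarrow> nat" where
  "pf_fix n \<sigma> = card {a \<in> parking_functions n. \<forall>i<n. a ! (\<sigma> i) = a ! i}"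

(* Frobenius characteristic of the permutation representation on parking functions,
   expanded in the power-sum basis: coefficient of p_mu is
   (1/n!) * sum over sigma of cycle type mu of chi(sigma) *)
definition PF_coeff :: "nat \<Rightarrow> nat multiset \<Rightarrow> real" where
  "PF_coeff n \<mu> = (\<Sum>\<sigma>\<in>{\<sigma>. \<sigma> permutes {0..<n} \<and> cycle_type n \<sigma> = \<mu>}.
                      real (pf_fix n \<sigma>)) / fact n"

definition PF :: "nat \<Rightarrow> nat \<Rightarrow> (nat \<Rightarrow> real) \<Rightarrow> real" where
  "PF n N x = (\<Sum>\<mu>\<in>partitions n. PF_coeff n \<mu> * pmono N x \<mu>)"

(* SH_n = PF_n(x/x): shiftification applied to the power-sum expansion of PF_n *)
definition SH :: "nat \<Rightarrow> nat \<Rightarrow> (nat \<Rightarrow> real) \<Rightarrow> real" where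
  "SH n N x = (\<Sum>\<mu>\<in>partitions n. PF_coeff n \<mu> * pmono_shift N x \<mu>)"

(* one-row Schur P-function: 1 + 2 sum_{n>=1} P_n t^n = prod_i (1+x_i t)/(1-x_i t) *)
definition SchurP :: "nat \<Rightarrow> (nat \<Rightarrow> real) \<Rightarrow> nat \<Rightarrow> real" where
  "SchurP N x n = fps_nth (\<Prod>i<N. (1 + fps_const (x i) * fps_X) / (1 - fps_const (x i) * fps_X)) n / 2"

definition V :: "nat \<Rightarrow> (nat \<Rightarrow> real) \<Rightarrow> nat multiset \<Rightarrow> real" where
  "V N x la = (\<Prod>k\<in>#la. SchurP N x k)"

end

theory Submission
  imports Defs "HOL-Combinatorics.Multiset_Permutations"
begin

unbundle fps_syntax

lemma raney:
  fixes c :: "nat \<Rightarrow> nat" and m :: nat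
  assumes m: "m \<ge> 1" and tot: "(\<Sum>u<m. c u) = m - 1"
  shows "card {s. s < m \<and> (\<forall>k\<in>{1..<m}. k \<le> (\<Sum>u<k. c ((u+s) mod m)))} = 1"
proof -
  define f where "f u = int (c (u mod m)) - 1" for u
  define P where "P t = (\<Sum>u<t. f u)" for t
  have P0: "P m = -1"
  proof -
    have "P m = (\<Sum>u<m. int (c u) - 1)" unfolding P_def f_def by (intro sum.cong) auto
    also have "\<dots> = int (\<Sum>u<m. c u) - int m" by (simp add: sum_subtractf)
    finally show ?thesis using tot m by simp
  qed
  have per: "P (t + m) = P t - 1" for t
  proof (induction t)
    case 0 then show ?case using P0 by (simp add: P_def)
  next
    case (Suc t)
    have "f (t + m) = f t" unfolding f_def by simp
    then show ?case using Suc by (simp add: P_def)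
  qed
  have shift: "int (\<Sum>u<k. c ((u+s) mod m)) = P (s+k) - P s + int k" for s k
  proof (induction k)
    case 0 then show ?case by simp
  next
    case (Suc k)
    have "f (s + k) = int (c ((k+s) mod m)) - 1" unfolding f_def by (simp add: add.commute)
    then show ?case using Suc by (simp add: P_def)
  qed
  have good_iff: "(\<forall>k\<in>{1..<m}. k \<le> (\<Sum>u<k. c ((u+s) mod m))) \<longleftrightarrow> (\<forall>k\<in>{1..<m}. P s \<le> P (s+k))" for s
  proof -
    have "k \<le> (\<Sum>u<k. c ((u+s) mod m)) \<longleftrightarrow> P s \<le> P (s+k)" for k
      using shift[where k=k and s=s] by linarith
    then show ?thesis by auto
  qed
  define s0 where "s0 = (LEAST s. s < m \<and> (\<forall>t<m. P s \<le> P t))"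
  have ex: "\<exists>s. s < m \<and> (\<forall>t<m. P s \<le> P t)"
  proof -
    have "finite (P ` {..<m})" "P ` {..<m} \<noteq> {}" using m by (auto simp: lessThan_empty_iff)
    then obtain v where "v \<in> P ` {..<m}" "\<forall>w \<in> P ` {..<m}. v \<le> w"
      by (metis Min_in Min_le)
    then show ?thesis by auto
  qed
  have s0: "s0 < m" "\<forall>t<m. P s0 \<le> P t" using LeastI_ex[OF ex] unfolding s0_def by auto
  have s0l: "t < s0 \<Longrightarrow> P s0 < P t" for t
  proof (rule ccontr)
    assume "t < s0" "\<not> P s0 < P t"
    then have "t < m \<and> (\<forall>t'<m. P t \<le> P t')" using s0 by force
    then have "s0 \<le> t" unfolding s0_def by (rule Least_le)
    then show False using \<open>t < s0\<close> by simp
  qed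
  have good0: "\<forall>k\<in>{1..<m}. P s0 \<le> P (s0+k)"
  proof
    fix k assume k: "k \<in> {1..<m}"
    show "P s0 \<le> P (s0+k)"
    proof (cases "s0 + k < m")
      case True then show ?thesis using s0 by auto
    next
      case False
      define t where "t = s0 + k - m"
      have "s0 + k = t + m" "t < s0" using False k unfolding t_def by auto
      then show ?thesis using per[of t] s0l[of t] by simp
    qed
  qed
  have uniq: "s = s0" if "s < m" "\<forall>k\<in>{1..<m}. P s \<le> P (s+k)" for s
  proof (rule ccontr)
    assume ne: "s \<noteq> s0"
    have gen: False if a: "a < b" "b < m" "\<forall>k\<in>{1..<m}. P a \<le> P (a+k)" "\<forall>k\<in>{1..<m}. P b \<le> P (b+k)" for a b
    proof -
      have "b - a \<in> {1..<m}" using a by auto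
      then have "P a \<le> P (a + (b - a))" using a(3) by blast
      then have 1: "P a \<le> P b" using a by simp
      have "m + a - b \<in> {1..<m}" using a by auto
      then have "P b \<le> P (b + (m + a - b))" using a(4) by blast
      also have "b + (m + a - b) = a + m" using a by simp
      finally have "P b \<le> P a - 1" using per[of a] by simp
      then show False using 1 by simp
    qed
    show False
    proof (cases "s < s0")
      case True then show False using gen[of s s0] that s0 good0 by blast
    next
      case False then have "s0 < s" using ne by simp
      then show False using gen[of s0 s] that s0 good0 by blast
    qed
  qed
  have "{s. s < m \<and> (\<forall>k\<in>{1..<m}. k \<le> (\<Sum>u<k. c ((u+s) mod m)))} = {s0}"
  proof (intro set_eqI iffI)
    fix s assume "s \<in> {s. s < m \<and> (\<forall>k\<in>{1..<m}. k \<le> (\<Sum>u<k. c ((u+s) mod m)))}"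
    then show "s \<in> {s0}" using uniq good_iff by blast
  next
    fix s assume "s \<in> {s0}"
    then show "s \<in> {s. s < m \<and> (\<forall>k\<in>{1..<m}. k \<le> (\<Sum>u<k. c ((u+s) mod m)))}"
      using s0 good0 good_iff by blast
  qed
  then show ?thesis by simp
qed


lemma length_filter_mset: "length (filter P xs) = size (filter_mset P (mset xs))"
  by (metis mset_filter size_mset)

lemma pf_crit:
  assumes len: "length a = n" and pos: "\<forall>i<n. 1 \<le> a ! i"
  shows "a \<in> parking_functions n \<longleftrightarrow> (\<forall>k\<in>{1..n}. k \<le> card {j. j < n \<and> a ! j \<le> k})"
proof -
  define s where "s = sort a"
  have ls: "length s = n" using len by (simp add: s_def)
  have srt: "sorted s" by (simp add: s_def)
  have cnt: "card {j. j < n \<and> a ! j \<le> k} = card {j. j < n \<and> s ! j \<le> k}" for k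
  proof -
    have "card {j. j < n \<and> a ! j \<le> k} = length (filter (\<lambda>v. v \<le> k) a)"
      using len by (simp add: length_filter_conv_card)
    also have "\<dots> = length (filter (\<lambda>v. v \<le> k) s)"
      unfolding length_filter_mset s_def by simp
    also have "\<dots> = card {j. j < n \<and> s ! j \<le> k}"
      using ls by (simp add: length_filter_conv_card)
    finally show ?thesis .
  qed
  have "(\<forall>i<n. s ! i \<le> i + 1) \<longleftrightarrow> (\<forall>k\<in>{1..n}. k \<le> card {j. j < n \<and> s ! j \<le> k})"
  proof
    assume H: "\<forall>i<n. s ! i \<le> i + 1"
    show "\<forall>k\<in>{1..n}. k \<le> card {j. j < n \<and> s ! j \<le> k}"
    proof
      fix k assume k: "k \<in> {1..n}"
      have "{..<k} \<subseteq> {j. j < n \<and> s ! j \<le> k}"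
      proof
        fix j assume "j \<in> {..<k}"
        then have "j < n" "j + 1 \<le> k" using k by auto
        then show "j \<in> {j. j < n \<and> s ! j \<le> k}" using H by force
      qed
      then have "card {..<k} \<le> card {j. j < n \<and> s ! j \<le> k}" by (intro card_mono) auto
      then show "k \<le> card {j. j < n \<and> s ! j \<le> k}" by simp
    qed
  next
    assume H: "\<forall>k\<in>{1..n}. k \<le> card {j. j < n \<and> s ! j \<le> k}"
    show "\<forall>i<n. s ! i \<le> i + 1"
    proof (intro allI impI)
      fix i assume i: "i < n"
      show "s ! i \<le> i + 1"
      proof (rule ccontr)
        assume "\<not> s ! i \<le> i + 1"
        then have "{j. j < n \<and> s ! j \<le> i + 1} \<subseteq> {..<i}"
        proof (intro subsetI)
          fix j assume a: "\<not> s ! i \<le> i + 1" "j \<in> {j. j < n \<and> s ! j \<le> i + 1}"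
          show "j \<in> {..<i}"
          proof (rule ccontr)
            assume "j \<notin> {..<i}"
            then have "i \<le> j" by simp
            then have "s ! i \<le> s ! j" using srt ls a by (simp add: sorted_iff_nth_mono)
            then show False using a by simp
          qed
        qed
        then have "card {j. j < n \<and> s ! j \<le> i + 1} \<le> i"
          by (metis card_lessThan card_mono finite_lessThan)
        moreover have "i + 1 \<le> card {j. j < n \<and> s ! j \<le> i + 1}" using H i by auto
        ultimately show False by simp
      qed
    qed
  qed
  then show ?thesis unfolding parking_functions_def using len pos cnt by (auto simp: s_def)
qed

definition rot :: "nat \<Rightarrow> nat \<Rightarrow> nat list \<Rightarrow> nat list" where
  "rot m r b = map (\<lambda>v. (v - 1 + r) mod m + 1) b"

lemma mod_eq_helper:
  fixes m b r u :: nat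
  assumes "b < m" "r < m" "u < m"
  shows "(b + r) mod m = u \<longleftrightarrow> b = (u + (m - r)) mod m"
proof -
  have A: "x mod m = (if x < m then x else x - m)" if "x < 2*m" for x
    using that by (simp add: le_mod_geq)
  show ?thesis using assms A[of "b+r"] A[of "u + (m - r)"] by auto
qed

lemma rot_pf_unique:
  assumes len: "length b = n" and vals: "set b \<subseteq> {1..n+1}"
  shows "card {r. r < n+1 \<and> rot (n+1) r b \<in> parking_functions n} = 1"
proof -
  define m where "m = n + 1"
  define \<beta> where "\<beta> j = b ! j - 1" for j
  have \<beta>m: "\<beta> j < m" if j: "j < n" for j
  proof -
    from j have "b ! j \<in> set b" using len by simp
    then have "b ! j \<le> n + 1" using vals by auto
    then show ?thesis unfolding \<beta>_def m_def by simp
  qed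
  define c where "c u = card {j. j < n \<and> \<beta> j = u}" for u
  have tot: "(\<Sum>u<m. c u) = m - 1"
  proof -
    have "(\<Sum>u<m. c u) = (\<Sum>u<m. card {j \<in> {..<n}. \<beta> j = u})" unfolding c_def by simp
    also have "\<dots> = (\<Sum>u<m. \<Sum>j \<in> {j \<in> {..<n}. \<beta> j = u}. 1)" by simp
    also have "\<dots> = (\<Sum>j<n. 1)" using \<beta>m by (intro sum.group) auto
    finally show ?thesis unfolding m_def by simp
  qed
  have rotnth: "j < n \<Longrightarrow> rot m r b ! j = (\<beta> j + r) mod m + 1" for j r
    using len by (simp add: rot_def \<beta>_def)
  have cardk: "card {j. j < n \<and> rot m r b ! j \<le> k} = (\<Sum>u<k. c ((u + (m - r) mod m) mod m))"
    if r: "r < m" and k: "k \<le> m" for r k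
  proof -
    have "{j. j < n \<and> rot m r b ! j \<le> k} = (\<Union>u<k. {j. j < n \<and> \<beta> j = (u + (m - r) mod m) mod m})"
    proof (intro set_eqI iffI)
      fix j assume "j \<in> {j. j < n \<and> rot m r b ! j \<le> k}"
      then have j: "j < n" "(\<beta> j + r) mod m < k" using rotnth by auto
      define u where "u = (\<beta> j + r) mod m"
      have "u < m" unfolding u_def m_def by simp
      then have "\<beta> j = (u + (m - r)) mod m" using mod_eq_helper[of "\<beta> j" m r u] \<beta>m j r u_def by simp
      then show "j \<in> (\<Union>u<k. {j. j < n \<and> \<beta> j = (u + (m - r) mod m) mod m})"
        using j u_def by (auto simp: mod_add_right_eq)
    next
      fix j assume "j \<in> (\<Union>u<k. {j. j < n \<and> \<beta> j = (u + (m - r) mod m) mod m})"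
      then obtain u where u: "u < k" "j < n" "\<beta> j = (u + (m - r)) mod m" by (auto simp: mod_add_right_eq)
      then have "(\<beta> j + r) mod m = u" using mod_eq_helper[of "\<beta> j" m r u] \<beta>m r k by simp
      then show "j \<in> {j. j < n \<and> rot m r b ! j \<le> k}" using rotnth u by auto
    qed
    also have "card \<dots> = (\<Sum>u<k. card {j. j < n \<and> \<beta> j = (u + (m - r) mod m) mod m})"
    proof (rule card_UN_disjoint)
      show "\<forall>i\<in>{..<k}. \<forall>j\<in>{..<k}. i \<noteq> j \<longrightarrow>
          {j. j < n \<and> \<beta> j = (i + (m - r) mod m) mod m} \<inter> {ja. ja < n \<and> \<beta> ja = (j + (m - r) mod m) mod m} = {}"
      proof (intro ballI impI)
        fix i j assume ij: "i \<in> {..<k}" "j \<in> {..<k}" "i \<noteq> j"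
        show "{j. j < n \<and> \<beta> j = (i + (m - r) mod m) mod m} \<inter> {ja. ja < n \<and> \<beta> ja = (j + (m - r) mod m) mod m} = {}"
        proof (rule ccontr)
          assume "\<not> ?thesis"
          then obtain t where "t < n" "\<beta> t = (i + (m - r)) mod m" "\<beta> t = (j + (m - r)) mod m"
            by (auto simp: mod_add_right_eq)
          then have "(\<beta> t + r) mod m = i" "(\<beta> t + r) mod m = j"
            using mod_eq_helper[of "\<beta> t" m r] \<beta>m r k ij by auto
          then show False using ij by simp
        qed
      qed
    qed auto
    finally show ?thesis unfolding c_def by simp
  qed
  have good: "rot m r b \<in> parking_functions n \<longleftrightarrow>
      (\<forall>k\<in>{1..<m}. k \<le> (\<Sum>u<k. c ((u + (m - r) mod m) mod m)))" if r: "r < m" for r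
  proof -
    have "rot m r b \<in> parking_functions n \<longleftrightarrow> (\<forall>k\<in>{1..n}. k \<le> card {j. j < n \<and> rot m r b ! j \<le> k})"
      by (rule pf_crit) (auto simp: rot_def len)
    also have "\<dots> \<longleftrightarrow> (\<forall>k\<in>{1..<m}. k \<le> (\<Sum>u<k. c ((u + (m - r) mod m) mod m)))"
      using cardk[OF r] unfolding m_def by auto
    finally show ?thesis .
  qed
  define G where "G s \<longleftrightarrow> (\<forall>k\<in>{1..<m}. k \<le> (\<Sum>u<k. c ((u + s) mod m)))" for s
  have R: "card {s. s < m \<and> G s} = 1" unfolding G_def
    by (rule raney) (use tot in \<open>auto simp: m_def\<close>)
  have "{r. r < m \<and> rot m r b \<in> parking_functions n} = (\<lambda>s. (m - s) mod m) ` {s. s < m \<and> G s}"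
  proof (intro set_eqI iffI)
    fix r assume "r \<in> {r. r < m \<and> rot m r b \<in> parking_functions n}"
    then have r: "r < m" "G ((m - r) mod m)" using good unfolding G_def by auto
    have "r = (m - (m - r) mod m) mod m" using r by (cases "r = 0") auto
    then show "r \<in> (\<lambda>s. (m - s) mod m) ` {s. s < m \<and> G s}" using r by (intro image_eqI) auto
  next
    fix r assume "r \<in> (\<lambda>s. (m - s) mod m) ` {s. s < m \<and> G s}"
    then obtain s where s: "s < m" "G s" "r = (m - s) mod m" by auto
    have "s = (m - r) mod m" using s by (cases "s = 0") auto
    moreover have "r < m" using s unfolding m_def by simp
    ultimately have "r < m" "G ((m - r) mod m)" using s by auto
    then show "r \<in> {r. r < m \<and> rot m r b \<in> parking_functions n}" using good unfolding G_def by auto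
  qed
  also have "card \<dots> = card {s. s < m \<and> G s}"
  proof (rule card_image, rule inj_onI)
    fix s t assume "s \<in> {s. s < m \<and> G s}" "t \<in> {s. s < m \<and> G s}" "(m - s) mod m = (m - t) mod m"
    then show "s = t" by (cases "s = 0"; cases "t = 0") auto
  qed
  finally show ?thesis using R unfolding m_def by simp
qed


definition fixset :: "nat \<Rightarrow> (nat \<Rightarrow> nat) \<Rightarrow> nat list set" where
  "fixset n \<sigma> = {a. length a = n \<and> set a \<subseteq> {1..n+1} \<and> (\<forall>i<n. a ! (\<sigma> i) = a ! i)}"

lemma rot_rot:
  assumes "set a \<subseteq> {1..m}" "(r + r') mod m = 0"
  shows "rot m r (rot m r' a) = a"
proof -
  have "((v - 1 + r') mod m + 1 - 1 + r) mod m + 1 = v" if v: "v \<in> {1..m}" for v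
  proof -
    have "((v - 1 + r') mod m + 1 - 1 + r) mod m = ((v - 1 + r') mod m + r) mod m" by simp
    also have "\<dots> = (v - 1 + r' + r) mod m" by (rule mod_add_left_eq)
    also have "\<dots> = (v - 1 + (r + r')) mod m" by (simp only: add.assoc add.commute[of r' r])
    also have "\<dots> = ((v - 1) + (r + r') mod m) mod m" by (simp add: mod_add_right_eq)
    also have "\<dots> = v - 1" using assms(2) v by auto
    finally show ?thesis using v by simp
  qed
  then show ?thesis using assms(1) unfolding rot_def by (auto intro!: map_idI simp: subset_iff)
qed

lemma rot_set: "set (rot m r a) \<subseteq> {1..m}" if "m \<ge> 1"
  using that unfolding rot_def by (auto simp: Suc_le_eq)

lemma rot_fix: "\<forall>i<n. a ! (\<sigma> i) = a ! i \<Longrightarrow> length a = n \<Longrightarrow> \<forall>i<n. \<sigma> i < n \<Longrightarrow> \<forall>i<n. rot m r a ! (\<sigma> i) = rot m r a ! i"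
  unfolding rot_def by auto

lemma pf_vals: assumes "a \<in> parking_functions n" shows "set a \<subseteq> {1..n+1}"
proof
  fix v assume "v \<in> set a"
  then obtain j where j: "j < length a" "a ! j = v" by (auto simp: in_set_conv_nth)
  have "v \<in> set (sort a)" using \<open>v \<in> set a\<close> by simp
  then obtain i where i: "i < length (sort a)" "sort a ! i = v" unfolding in_set_conv_nth by blast
  have "length a = n" "\<forall>i<n. 1 \<le> a ! i" "\<forall>i<n. sort a ! i \<le> i + 1" using assms unfolding parking_functions_def by auto
  then show "v \<in> {1..n+1}" using i j by force
qed

lemma card_filter_sum: "finite R \<Longrightarrow> card {x\<in>R. P x} = (\<Sum>x\<in>R. if P x then 1 else 0)"
  using sum.inter_filter[of R "\<lambda>_. 1::nat" P] by simp

lemma pf_fix_times: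
  assumes \<sigma>: "\<forall>i<n. \<sigma> i < n"
  shows "(n+1) * pf_fix n \<sigma> = card (fixset n \<sigma>)"
proof -
  define m where "m = n + 1"
  define A where "A = fixset n \<sigma>"
  define PF where "PF = parking_functions n"
  have finA: "finite A"
  proof -
    have "A \<subseteq> {xs. set xs \<subseteq> {1..n+1} \<and> length xs = n}" unfolding A_def fixset_def by auto
    then show ?thesis by (rule finite_subset) (rule finite_lists_length_eq, simp)
  qed
  have pfA: "{a \<in> PF. \<forall>i<n. a ! (\<sigma> i) = a ! i} = {b \<in> A. b \<in> PF}"
    unfolding A_def PF_def fixset_def using pf_vals by (auto simp: parking_functions_def)
  have rotA: "rot m r b \<in> A" if "b \<in> A" for b r
  proof -
    have "length b = n" "\<forall>i<n. b ! (\<sigma> i) = b ! i" using that unfolding A_def fixset_def by auto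
    then have "\<forall>i<n. rot m r b ! (\<sigma> i) = rot m r b ! i" using rot_fix[of n b \<sigma> m r] \<sigma> by blast
    moreover have "set (rot m r b) \<subseteq> {1..n+1}" using rot_set[of m r b] unfolding m_def by simp
    moreover have "length (rot m r b) = n" using \<open>length b = n\<close> by (simp add: rot_def)
    ultimately show ?thesis unfolding A_def fixset_def by simp
  qed
  have inv: "rot m r (rot m ((m - r) mod m) b) = b" "rot m ((m - r) mod m) (rot m r b) = b"
    if "b \<in> A" "r < m" for b r
  proof -
    have s: "set b \<subseteq> {1..m}" using that unfolding A_def fixset_def m_def by auto
    have e1: "(r + (m - r) mod m) mod m = 0" using that by (cases "r = 0") auto
    have e2: "((m - r) mod m + r) mod m = 0" using that by (cases "r = 0") auto
    show "rot m r (rot m ((m - r) mod m) b) = b" by (rule rot_rot[OF s e1])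
    show "rot m ((m - r) mod m) (rot m r b) = b" by (rule rot_rot[OF s e2])
  qed
  have eachr: "card {b \<in> A. rot m r b \<in> PF} = card {b \<in> A. b \<in> PF}" if r: "r < m" for r
  proof -
    have "rot m r ` {b \<in> A. rot m r b \<in> PF} = {b \<in> A. b \<in> PF}"
    proof (intro set_eqI iffI)
      fix a assume "a \<in> rot m r ` {b \<in> A. rot m r b \<in> PF}"
      then show "a \<in> {b \<in> A. b \<in> PF}" using rotA by auto
    next
      fix a assume a: "a \<in> {b \<in> A. b \<in> PF}"
      then have "rot m ((m - r) mod m) a \<in> A" "rot m r (rot m ((m - r) mod m) a) = a"
        using rotA inv r by auto
      then show "a \<in> rot m r ` {b \<in> A. rot m r b \<in> PF}" using a by (intro image_eqI[where x="rot m ((m - r) mod m) a"]) auto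
    qed
    moreover have "inj_on (rot m r) {b \<in> A. rot m r b \<in> PF}"
      by (rule inj_on_inverseI[where g = "rot m ((m - r) mod m)"]) (use inv[OF _ r] in blast)
    ultimately show ?thesis using card_image by fastforce
  qed
  have "card A = (\<Sum>b\<in>A. card {r. r < m \<and> rot m r b \<in> PF})"
  proof -
    have "card {r. r < m \<and> rot m r b \<in> PF} = 1" if "b \<in> A" for b
      using rot_pf_unique[of b n] that unfolding A_def fixset_def m_def PF_def by auto
    then show ?thesis by simp
  qed
  also have "\<dots> = (\<Sum>b\<in>A. \<Sum>r<m. if rot m r b \<in> PF then 1 else 0)"
  proof (intro sum.cong refl)
    fix b assume "b \<in> A"
    have "{r. r < m \<and> rot m r b \<in> PF} = {r \<in> {..<m}. rot m r b \<in> PF}" by auto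
    then show "card {r. r < m \<and> rot m r b \<in> PF} = (\<Sum>r<m. if rot m r b \<in> PF then 1 else 0)"
      using card_filter_sum[of "{..<m}"] by simp
  qed
  also have "\<dots> = (\<Sum>r<m. \<Sum>b\<in>A. if rot m r b \<in> PF then 1 else 0)" by (rule sum.swap)
  also have "\<dots> = (\<Sum>r<m. card {b \<in> A. rot m r b \<in> PF})"
    using finA card_filter_sum[of A] by (intro sum.cong refl) simp
  also have "\<dots> = (\<Sum>r<m. card {b \<in> A. b \<in> PF})" by (intro sum.cong refl eachr) auto
  also have "\<dots> = m * pf_fix n \<sigma>" unfolding pf_fix_def using pfA by (simp add: PF_def)
  finally show ?thesis unfolding A_def m_def by simp
qed


definition cycs :: "('a \<Rightarrow> 'a) \<Rightarrow> 'a set \<Rightarrow> 'a set set" where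
  "cycs \<sigma> S = (\<lambda>i. orbit \<sigma> i) ` S"

definition Phi :: "(nat \<Rightarrow> real) \<Rightarrow> 'a set \<Rightarrow> ('a \<Rightarrow> 'a) \<Rightarrow> real" where
  "Phi w S \<sigma> = (\<Prod>c\<in>cycs \<sigma> S. w (card c))"

definition Cyc :: "'a \<Rightarrow> 'a set \<Rightarrow> ('a \<Rightarrow> 'a) set" where
  "Cyc a C = {\<rho>. \<rho> permutes C \<and> orbit \<rho> a = C}"

definition comb :: "'a set \<Rightarrow> ('a \<Rightarrow> 'a) \<Rightarrow> ('a \<Rightarrow> 'a) \<Rightarrow> 'a \<Rightarrow> 'a" where
  "comb C \<rho> \<tau> x = (if x \<in> C then \<rho> x else \<tau> x)"

lemma orb_self: "\<sigma> permutes S \<Longrightarrow> finite S \<Longrightarrow> i \<in> orbit \<sigma> i"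
  by (meson permutation_permutes permutation_self_in_orbit)

lemma orb_sub: "\<sigma> permutes S \<Longrightarrow> i \<in> S \<Longrightarrow> orbit \<sigma> i \<subseteq> S"
  by (rule permutes_orbit_subset)

lemma orb_eq: "\<sigma> permutes S \<Longrightarrow> finite S \<Longrightarrow> j \<in> orbit \<sigma> i \<Longrightarrow> orbit \<sigma> j = orbit \<sigma> i"
  by (metis cyclic_on_orbit orbit_cyclic_eq3)

lemma orb_fin: "\<sigma> permutes S \<Longrightarrow> finite S \<Longrightarrow> finite (orbit \<sigma> i)"
  by (meson finite_orbit orb_self)

lemma orb_image:
  assumes "\<sigma> permutes S" "finite S"
  shows "\<sigma> ` orbit \<sigma> a = orbit \<sigma> a"
proof -
  have cyc: "cyclic_on \<sigma> (orbit \<sigma> a)" using assms by (rule cyclic_on_orbit)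
  show ?thesis
  proof (intro set_eqI iffI)
    fix y assume "y \<in> \<sigma> ` orbit \<sigma> a" then show "y \<in> orbit \<sigma> a" using cyclic_on_inI[OF cyc] by auto
  next
    fix y assume y: "y \<in> orbit \<sigma> a"
    have "\<sigma> (inv \<sigma> y) = y" using assms(1) by (meson permutes_inverses(1))
    then have "inv \<sigma> y \<in> orbit \<sigma> a" using cyclic_on_f_in[OF assms(1) cyc] y by metis
    then show "y \<in> \<sigma> ` orbit \<sigma> a" using \<open>\<sigma> (inv \<sigma> y) = y\<close> by (metis image_eqI)
  qed
qed

lemma restrict_orbit_permutes:
  assumes "\<sigma> permutes S" "finite S"
  shows "perm_restrict \<sigma> (orbit \<sigma> a) permutes (orbit \<sigma> a)"
proof (rule bij_imp_permutes)
  let ?C = "orbit \<sigma> a"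
  have "inj_on (perm_restrict \<sigma> ?C) ?C"
    using permutes_inj_on[OF assms(1)] by (auto simp: inj_on_def perm_restrict_def)
  moreover have "perm_restrict \<sigma> ?C ` ?C = ?C"
    using orb_image[OF assms] by (auto simp: perm_restrict_def image_def)
  ultimately show "bij_betw (perm_restrict \<sigma> ?C) ?C ?C" by (simp add: bij_betw_def)
  show "\<And>x. x \<notin> ?C \<Longrightarrow> perm_restrict \<sigma> ?C x = x" by (simp add: perm_restrict_def)
qed

lemma comb_eq_comp:
  assumes "\<rho> permutes C" "\<tau> permutes (S - C)"
  shows "comb C \<rho> \<tau> = \<rho> \<circ> \<tau>"
proof
  fix x show "comb C \<rho> \<tau> x = (\<rho> \<circ> \<tau>) x"
  proof (cases "x \<in> C")
    case True then show ?thesis using permutes_not_in[OF assms(2), of x] by (simp add: comb_def)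
  next
    case False
    then have "\<tau> x \<notin> C"
      using assms(2) by (metis DiffD2 DiffI permutes_in_image permutes_not_in)
    then show ?thesis using False permutes_not_in[OF assms(1)] by (simp add: comb_def)
  qed
qed

lemma comb_permutes:
  assumes "\<rho> permutes C" "\<tau> permutes (S - C)" "C \<subseteq> S"
  shows "comb C \<rho> \<tau> permutes S"
  unfolding comb_eq_comp[OF assms(1,2)]
  by (rule permutes_compose) (use assms permutes_subset in \<open>auto\<close>)

lemma orbit_comb_a:
  assumes "\<rho> permutes C" "a \<in> C"
  shows "orbit (comb C \<rho> \<tau>) a = orbit \<rho> a"
  by (rule orbit_cong0[OF assms(2)]) (use assms in \<open>auto simp: comb_def permutes_in_image\<close>)

lemma orbit_comb_rest:
  assumes "\<tau> permutes (S - C)" "i \<in> S - C"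
  shows "orbit (comb C \<rho> \<tau>) i = orbit \<tau> i"
proof -
  have "\<forall>x\<in>S - C. \<tau> x \<in> S - C" using permutes_in_image[OF assms(1)] by blast
  then show ?thesis by (intro orbit_cong0[OF assms(2)]) (auto simp: comb_def)
qed

lemma cycs_comb:
  assumes fin: "finite S" and \<rho>: "\<rho> \<in> Cyc a C" and \<tau>: "\<tau> permutes (S - C)" and C: "a \<in> C" "C \<subseteq> S"
  shows "cycs (comb C \<rho> \<tau>) S = insert C (cycs \<tau> (S - C))" and "C \<notin> cycs \<tau> (S - C)"
proof -
  let ?\<sigma> = "comb C \<rho> \<tau>"
  have \<rho>p: "\<rho> permutes C" and \<rho>o: "orbit \<rho> a = C" using \<rho> by (auto simp: Cyc_def)
  have \<sigma>p: "?\<sigma> permutes S" by (rule comb_permutes[OF \<rho>p \<tau> C(2)])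
  have oa: "orbit ?\<sigma> a = C" using orbit_comb_a[OF \<rho>p C(1)] \<rho>o by simp
  have oC: "orbit ?\<sigma> i = C" if "i \<in> C" for i
    using orb_eq[OF \<sigma>p fin, of i a] oa that by simp
  have oR: "orbit ?\<sigma> i = orbit \<tau> i" if "i \<in> S - C" for i by (rule orbit_comb_rest[OF \<tau> that])
  have "S = C \<union> (S - C)" using C by auto
  then have "cycs ?\<sigma> S = (\<lambda>i. orbit ?\<sigma> i) ` C \<union> (\<lambda>i. orbit ?\<sigma> i) ` (S - C)"
    unfolding cycs_def by (metis image_Un)
  also have "(\<lambda>i. orbit ?\<sigma> i) ` C = {C}" using oC C(1) by auto
  also have "(\<lambda>i. orbit ?\<sigma> i) ` (S - C) = cycs \<tau> (S - C)" unfolding cycs_def using oR by auto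
  finally show "cycs ?\<sigma> S = insert C (cycs \<tau> (S - C))" by simp
  show "C \<notin> cycs \<tau> (S - C)"
  proof
    assume "C \<in> cycs \<tau> (S - C)"
    then obtain i where i: "i \<in> S - C" "C = orbit \<tau> i" unfolding cycs_def by auto
    have "i \<in> orbit \<tau> i" using orb_self[OF \<tau>] fin by simp
    then show False using i by simp
  qed
qed

lemma Phi_comb:
  assumes fin: "finite S" and \<rho>: "\<rho> \<in> Cyc a C" and \<tau>: "\<tau> permutes (S - C)" and C: "a \<in> C" "C \<subseteq> S"
  shows "Phi w S (comb C \<rho> \<tau>) = w (card C) * Phi w (S - C) \<tau>"
proof -
  have "finite (cycs \<tau> (S - C))" unfolding cycs_def using fin by simp
  then show ?thesis unfolding Phi_def cycs_comb(1)[OF assms] using cycs_comb(2)[OF assms] by simp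
qed

lemma comb_bij:
  assumes fin: "finite S" and C: "a \<in> C" "C \<subseteq> S"
  shows "bij_betw (\<lambda>(\<rho>, \<tau>). comb C \<rho> \<tau>) (Cyc a C \<times> {\<tau>. \<tau> permutes (S - C)})
           {\<sigma>. \<sigma> permutes S \<and> orbit \<sigma> a = C}"
proof (rule bij_betw_byWitness[where f' = "\<lambda>\<sigma>. (perm_restrict \<sigma> C, perm_restrict \<sigma> (S - C))"])
  show "\<forall>p\<in>Cyc a C \<times> {\<tau>. \<tau> permutes S - C}.
       (perm_restrict ((\<lambda>(\<rho>, \<tau>). comb C \<rho> \<tau>) p) C, perm_restrict ((\<lambda>(\<rho>, \<tau>). comb C \<rho> \<tau>) p) (S - C)) = p"
  proof
    fix p assume p: "p \<in> Cyc a C \<times> {\<tau>. \<tau> permutes S - C}"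
    obtain \<rho> \<tau> where pe: "p = (\<rho>, \<tau>)" by force
    have \<rho>p: "\<rho> permutes C" and \<tau>p: "\<tau> permutes S - C" using p pe by (auto simp: Cyc_def)
    have "perm_restrict (comb C \<rho> \<tau>) C = \<rho>"
      using permutes_not_in[OF \<rho>p] by (auto simp: perm_restrict_def comb_def)
    moreover have "perm_restrict (comb C \<rho> \<tau>) (S - C) = \<tau>"
      using permutes_not_in[OF \<tau>p] by (auto simp: perm_restrict_def comb_def fun_eq_iff)
    ultimately show "(perm_restrict ((\<lambda>(\<rho>, \<tau>). comb C \<rho> \<tau>) p) C, perm_restrict ((\<lambda>(\<rho>, \<tau>). comb C \<rho> \<tau>) p) (S - C)) = p"
      using pe by simp
  qed
  show "\<forall>\<sigma>\<in>{\<sigma>. \<sigma> permutes S \<and> orbit \<sigma> a = C}.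
          (\<lambda>(\<rho>, \<tau>). comb C \<rho> \<tau>) (perm_restrict \<sigma> C, perm_restrict \<sigma> (S - C)) = \<sigma>"
  proof
    fix \<sigma> assume "\<sigma> \<in> {\<sigma>. \<sigma> permutes S \<and> orbit \<sigma> a = C}"
    then have \<sigma>p: "\<sigma> permutes S" by auto
    show "(\<lambda>(\<rho>, \<tau>). comb C \<rho> \<tau>) (perm_restrict \<sigma> C, perm_restrict \<sigma> (S - C)) = \<sigma>"
      using permutes_not_in[OF \<sigma>p] by (auto simp: perm_restrict_def comb_def fun_eq_iff)
  qed
  show "(\<lambda>(\<rho>, \<tau>). comb C \<rho> \<tau>) ` (Cyc a C \<times> {\<tau>. \<tau> permutes S - C}) \<subseteq> {\<sigma>. \<sigma> permutes S \<and> orbit \<sigma> a = C}"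
  proof
    fix \<sigma> assume "\<sigma> \<in> (\<lambda>(\<rho>, \<tau>). comb C \<rho> \<tau>) ` (Cyc a C \<times> {\<tau>. \<tau> permutes S - C})"
    then obtain \<rho> \<tau> where e: "\<sigma> = comb C \<rho> \<tau>" "\<rho> \<in> Cyc a C" "\<tau> permutes S - C" by auto
    have \<rho>p: "\<rho> permutes C" and \<rho>o: "orbit \<rho> a = C" using e by (auto simp: Cyc_def)
    show "\<sigma> \<in> {\<sigma>. \<sigma> permutes S \<and> orbit \<sigma> a = C}"
      using comb_permutes[OF \<rho>p e(3) C(2)] orbit_comb_a[OF \<rho>p C(1)] \<rho>o e(1) by simp
  qed
  show "(\<lambda>\<sigma>. (perm_restrict \<sigma> C, perm_restrict \<sigma> (S - C))) ` {\<sigma>. \<sigma> permutes S \<and> orbit \<sigma> a = C}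
          \<subseteq> Cyc a C \<times> {\<tau>. \<tau> permutes S - C}"
  proof
    fix p assume "p \<in> (\<lambda>\<sigma>. (perm_restrict \<sigma> C, perm_restrict \<sigma> (S - C))) ` {\<sigma>. \<sigma> permutes S \<and> orbit \<sigma> a = C}"
    then obtain \<sigma> where e: "p = (perm_restrict \<sigma> C, perm_restrict \<sigma> (S - C))" "\<sigma> permutes S" "orbit \<sigma> a = C" by auto
    have cyc: "cyclic_on \<sigma> C" using cyclic_on_orbit[OF e(2) fin, of a] e(3) by simp
    have 1: "perm_restrict \<sigma> C permutes C" using restrict_orbit_permutes[OF e(2) fin, of a] e(3) by simp
    have 2: "orbit (perm_restrict \<sigma> C) a = C"
    proof -
      have "orbit (perm_restrict \<sigma> C) a = orbit \<sigma> a"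
        by (rule orbit_cong0[OF C(1)]) (use cyclic_on_inI[OF cyc] in \<open>auto simp: perm_restrict_def\<close>)
      then show ?thesis using e(3) by simp
    qed
    have 3: "perm_restrict \<sigma> (S - C) permutes (S - C)" by (rule perm_restrict_diff_cyclic[OF e(2) cyc])
    show "p \<in> Cyc a C \<times> {\<tau>. \<tau> permutes S - C}" using 1 2 3 e(1) by (simp add: Cyc_def)
  qed
qed

lemma perm_decomp_sum:
  assumes fin: "finite S" and a: "a \<in> S"
  shows "(\<Sum>\<sigma>\<in>{\<sigma>. \<sigma> permutes S}. Phi w S \<sigma>) =
         (\<Sum>C\<in>{C. a \<in> C \<and> C \<subseteq> S}. real (card (Cyc a C)) * w (card C) * (\<Sum>\<tau>\<in>{\<tau>. \<tau> permutes (S - C)}. Phi w (S - C) \<tau>))"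
proof -
  have finT: "finite {C. a \<in> C \<and> C \<subseteq> S}" 
  proof (rule finite_subset)
    show "{C. a \<in> C \<and> C \<subseteq> S} \<subseteq> Pow S" by auto
    show "finite (Pow S)" using fin by simp
  qed
  have "(\<Sum>\<sigma>\<in>{\<sigma>. \<sigma> permutes S}. Phi w S \<sigma>) =
        (\<Sum>C\<in>{C. a \<in> C \<and> C \<subseteq> S}. \<Sum>\<sigma>\<in>{\<sigma> \<in> {\<sigma>. \<sigma> permutes S}. orbit \<sigma> a = C}. Phi w S \<sigma>)"
  proof (rule sum.group[symmetric])
    show "finite {\<sigma>. \<sigma> permutes S}" by (rule finite_permutations[OF fin])
    show "finite {C. a \<in> C \<and> C \<subseteq> S}" by (rule finT)
    show "(\<lambda>\<sigma>. orbit \<sigma> a) ` {\<sigma>. \<sigma> permutes S} \<subseteq> {C. a \<in> C \<and> C \<subseteq> S}"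
    proof
      fix C assume "C \<in> (\<lambda>\<sigma>. orbit \<sigma> a) ` {\<sigma>. \<sigma> permutes S}"
      then obtain \<sigma> where "\<sigma> permutes S" "C = orbit \<sigma> a" by auto
      then show "C \<in> {C. a \<in> C \<and> C \<subseteq> S}" using orb_self[OF _ fin] orb_sub[OF _ a] by auto
    qed
  qed
  also have "\<dots> = (\<Sum>C\<in>{C. a \<in> C \<and> C \<subseteq> S}. real (card (Cyc a C)) * w (card C) * (\<Sum>\<tau>\<in>{\<tau>. \<tau> permutes (S - C)}. Phi w (S - C) \<tau>))"
  proof (intro sum.cong refl)
    fix C assume "C \<in> {C. a \<in> C \<and> C \<subseteq> S}"
    then have C: "a \<in> C" "C \<subseteq> S" by auto
    have eqs: "{\<sigma> \<in> {\<sigma>. \<sigma> permutes S}. orbit \<sigma> a = C} = {\<sigma>. \<sigma> permutes S \<and> orbit \<sigma> a = C}" by blast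
    have "(\<Sum>\<sigma>\<in>{\<sigma> \<in> {\<sigma>. \<sigma> permutes S}. orbit \<sigma> a = C}. Phi w S \<sigma>) =
          (\<Sum>p\<in>Cyc a C \<times> {\<tau>. \<tau> permutes (S - C)}. Phi w S ((\<lambda>(\<rho>, \<tau>). comb C \<rho> \<tau>) p))"
      unfolding eqs by (rule sum.reindex_bij_betw[OF comb_bij[OF fin C], symmetric])
    also have "\<dots> = (\<Sum>(\<rho>,\<tau>)\<in>Cyc a C \<times> {\<tau>. \<tau> permutes (S - C)}. w (card C) * Phi w (S - C) \<tau>)"
    proof (rule sum.cong[OF refl])
      fix p assume p: "p \<in> Cyc a C \<times> {\<tau>. \<tau> permutes (S - C)}"
      obtain \<rho> \<tau> where pe: "p = (\<rho>, \<tau>)" by force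
      have "\<rho> \<in> Cyc a C" "\<tau> permutes (S - C)" using p pe by auto
      then show "Phi w S ((\<lambda>(\<rho>, \<tau>). comb C \<rho> \<tau>) p) = (case p of (\<rho>,\<tau>) \<Rightarrow> w (card C) * Phi w (S - C) \<tau>)"
        using Phi_comb[OF fin _ _ C] pe by simp
    qed
    also have "\<dots> = (\<Sum>\<rho>\<in>Cyc a C. \<Sum>\<tau>\<in>{\<tau>. \<tau> permutes (S - C)}. w (card C) * Phi w (S - C) \<tau>)"
      by (rule sum.cartesian_product[symmetric])
    also have "\<dots> = (\<Sum>\<rho>\<in>Cyc a C. w (card C) * (\<Sum>\<tau>\<in>{\<tau>. \<tau> permutes (S - C)}. Phi w (S - C) \<tau>))"
      by (simp only: sum_distrib_left)
    also have "\<dots> = real (card (Cyc a C)) * w (card C) * (\<Sum>\<tau>\<in>{\<tau>. \<tau> permutes (S - C)}. Phi w (S - C) \<tau>)"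
      by (simp only: sum_constant mult.assoc)
    finally show "(\<Sum>\<sigma>\<in>{\<sigma> \<in> {\<sigma>. \<sigma> permutes S}. orbit \<sigma> a = C}. Phi w S \<sigma>) = real (card (Cyc a C)) * w (card C) * (\<Sum>\<tau>\<in>{\<tau>. \<tau> permutes (S - C)}. Phi w (S - C) \<tau>)" .
  qed
  finally show ?thesis .
qed


lemma sum_pow_card:
  fixes g :: "nat \<Rightarrow> real"
  assumes fin: "finite T"
  shows "(\<Sum>D\<in>Pow T. g (card D)) = (\<Sum>j\<le>card T. real (card T choose j) * g j)"
proof -
  have "(\<Sum>D\<in>Pow T. g (card D)) = (\<Sum>j\<in>{..card T}. \<Sum>D\<in>{D \<in> Pow T. card D = j}. g (card D))"
  proof (rule sum.group[symmetric])
    show "finite (Pow T)" using fin by simp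
    show "finite {..card T}" by simp
    show "card ` Pow T \<subseteq> {..card T}" using fin by (auto intro: card_mono)
  qed
  also have "\<dots> = (\<Sum>j\<le>card T. real (card T choose j) * g j)"
  proof (rule sum.cong[OF refl])
    fix j assume "j \<in> {..card T}"
    have "(\<Sum>D\<in>{D \<in> Pow T. card D = j}. g (card D)) = (\<Sum>D\<in>{D \<in> Pow T. card D = j}. g j)"
      by (rule sum.cong) auto
    also have "\<dots> = real (card {D \<in> Pow T. card D = j}) * g j" by simp
    also have "card {D \<in> Pow T. card D = j} = card T choose j"
    proof -
      have "{D \<in> Pow T. card D = j} = {D. D \<subseteq> T \<and> card D = j}" by auto
      then show ?thesis using n_subsets[OF fin] by simp
    qed
    finally show "(\<Sum>D\<in>{D \<in> Pow T. card D = j}. g (card D)) = real (card T choose j) * g j" .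
  qed
  finally show ?thesis .
qed

lemma sum_T_card:
  fixes f :: "nat \<Rightarrow> real"
  assumes fin: "finite S" and a: "a \<in> S"
  shows "(\<Sum>C\<in>{C. a \<in> C \<and> C \<subseteq> S}. f (card C)) = (\<Sum>j\<le>card S - 1. real (card S - 1 choose j) * f (j + 1))"
proof -
  have img: "{C. a \<in> C \<and> C \<subseteq> S} = insert a ` Pow (S - {a})"
  proof (intro set_eqI iffI)
    fix C assume "C \<in> {C. a \<in> C \<and> C \<subseteq> S}"
    then have "C = insert a (C - {a})" "C - {a} \<in> Pow (S - {a})" by auto
    then show "C \<in> insert a ` Pow (S - {a})" by (metis image_eqI)
  qed (use a in auto)
  have inj: "inj_on (insert a) (Pow (S - {a}))"
    by (rule inj_onI) (metis Diff_insert_absorb PowD subset_Diff_insert)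
  have "(\<Sum>C\<in>{C. a \<in> C \<and> C \<subseteq> S}. f (card C)) = (\<Sum>D\<in>Pow (S - {a}). f (card (insert a D)))"
    unfolding img by (simp add: sum.reindex[OF inj])
  also have "\<dots> = (\<Sum>D\<in>Pow (S - {a}). f (card D + 1))"
  proof (rule sum.cong[OF refl])
    fix D assume "D \<in> Pow (S - {a})"
    then have "finite D" "a \<notin> D" using fin by (auto intro: finite_subset)
    then show "f (card (insert a D)) = f (card D + 1)" by simp
  qed
  also have "\<dots> = (\<Sum>j\<le>card (S - {a}). real (card (S - {a}) choose j) * f (j + 1))"
    by (rule sum_pow_card[where g = "\<lambda>k. f (k + 1)"]) (use fin in simp)
  also have "card (S - {a}) = card S - 1" using fin a by simp
  finally show ?thesis .
qed

lemma Phi_one: "Phi (\<lambda>_. 1) S \<sigma> = 1" by (simp add: Phi_def)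

lemma fact_split:
  assumes "j \<le> n"
  shows "real (n choose j) * (fact j * fact (n - j)) = fact n"
  using binomial_fact_lemma[OF assms] by (metis (mono_tags, lifting) mult.commute of_nat_fact of_nat_mult)

lemma cyc_card:
  assumes "finite C" "a \<in> C"
  shows "card (Cyc a C) = fact (card C - 1)"
  using assms
proof (induction "card C" arbitrary: C a rule: less_induct)
  case less
  define n where "n = card C"
  have n1: "n \<ge> 1" using less.prems n_def by (metis One_nat_def Suc_leI card_gt_0_iff empty_iff)
  define T where "T = {C'. a \<in> C' \<and> C' \<subseteq> C}"
  have finT: "finite T" unfolding T_def
  proof (rule finite_subset)
    show "{C'. a \<in> C' \<and> C' \<subseteq> C} \<subseteq> Pow C" by auto
    show "finite (Pow C)" using less.prems by simp
  qed
  have dec: "real (fact n) = (\<Sum>C'\<in>T. real (card (Cyc a C')) * fact (n - card C'))"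
  proof -
    have "real (fact n) = (\<Sum>\<sigma>\<in>{\<sigma>. \<sigma> permutes C}. Phi (\<lambda>_. 1) C \<sigma>)"
      using card_permutations[of C n] less.prems n_def by (simp add: Phi_one)
    also have "\<dots> = (\<Sum>C'\<in>T. real (card (Cyc a C')) * 1 * (\<Sum>\<tau>\<in>{\<tau>. \<tau> permutes (C - C')}. Phi (\<lambda>_. 1) (C - C') \<tau>))"
      unfolding T_def by (rule perm_decomp_sum[OF less.prems])
    also have "\<dots> = (\<Sum>C'\<in>T. real (card (Cyc a C')) * fact (n - card C'))"
    proof (rule sum.cong[OF refl])
      fix C' assume "C' \<in> T"
      then have "C' \<subseteq> C" unfolding T_def by auto
      then have "card (C - C') = n - card C'" using less.prems n_def by (meson card_Diff_subset finite_subset)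
      then have "(\<Sum>\<tau>\<in>{\<tau>. \<tau> permutes (C - C')}. Phi (\<lambda>_. 1) (C - C') \<tau>) = fact (n - card C')"
        using card_permutations[of "C - C'" "n - card C'"] less.prems by (simp add: Phi_one)
      then show "real (card (Cyc a C')) * 1 * (\<Sum>\<tau>\<in>{\<tau>. \<tau> permutes (C - C')}. Phi (\<lambda>_. 1) (C - C') \<tau>) =
          real (card (Cyc a C')) * fact (n - card C')" by simp
    qed
    finally show ?thesis .
  qed
  have CT: "C \<in> T" unfolding T_def using less.prems by auto
  have IH: "real (card (Cyc a C')) = fact (card C' - 1)" if "C' \<in> T - {C}" for C'
  proof -
    have "C' \<subset> C" "a \<in> C'" using that unfolding T_def by auto
    then have "card C' < card C" "finite C'" using less.prems by (auto intro: psubset_card_mono finite_subset)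
    then show ?thesis using less.hyps[of C' a] \<open>a \<in> C'\<close> by simp
  qed
  have full: "(\<Sum>C'\<in>T. (fact (card C' - 1) :: real) * fact (n - card C')) = fact n"
  proof -
    have "(\<Sum>C'\<in>T. (fact (card C' - 1) :: real) * fact (n - card C')) =
          (\<Sum>j\<le>n - 1. real (n - 1 choose j) * (fact (j + 1 - 1) * fact (n - (j + 1))))"
      unfolding T_def n_def by (rule sum_T_card[OF less.prems, where f = "\<lambda>k. fact (k - 1) * fact (card C - k)"])
    also have "\<dots> = (\<Sum>j\<le>n - 1. (fact (n - 1) :: real))"
    proof (rule sum.cong[OF refl])
      fix j assume "j \<in> {..n - 1}"
      then have "j \<le> n - 1" by simp
      moreover have "n - (j + 1) = n - 1 - j" by simp
      ultimately show "real (n - 1 choose j) * (fact (j + 1 - 1) * fact (n - (j + 1))) = fact (n - 1)"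
        using fact_split[of j "n - 1"] by simp
    qed
    also have "\<dots> = real n * fact (n - 1)" using n1 by simp
    also have "\<dots> = fact n" using n1 by (metis fact_num_eq_if of_nat_fact not_one_le_zero)
    finally show ?thesis .
  qed
  have "(\<Sum>C'\<in>T. real (card (Cyc a C')) * fact (n - card C')) =
        real (card (Cyc a C)) * fact (n - card C) + (\<Sum>C'\<in>T - {C}. real (card (Cyc a C')) * fact (n - card C'))"
    using finT CT by (simp add: sum.remove)
  also have "(\<Sum>C'\<in>T - {C}. real (card (Cyc a C')) * fact (n - card C')) = (\<Sum>C'\<in>T - {C}. fact (card C' - 1) * fact (n - card C'))"
    using IH by (intro sum.cong) auto
  also have "\<dots> = fact n - fact (card C - 1) * fact (n - card C)"
    using full finT CT by (simp add: sum.remove)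
  finally have "real (fact n) = real (card (Cyc a C)) + fact n - fact (card C - 1)" using dec n_def by simp
  then have "real (card (Cyc a C)) = fact (card C - 1)" by (simp add: n_def)
  then show ?case by (metis of_nat_eq_iff of_nat_fact)
qed

lemma exp_formula:
  fixes w g :: "nat \<Rightarrow> real"
  assumes g0: "g 0 = 1" and rec: "\<And>m. m \<ge> 1 \<Longrightarrow> real m * g m = (\<Sum>k=1..m. w k * g (m - k))"
  shows "finite S \<Longrightarrow> (\<Sum>\<sigma>\<in>{\<sigma>. \<sigma> permutes S}. Phi w S \<sigma>) = fact (card S) * g (card S)"
proof (induction "card S" arbitrary: S rule: less_induct)
  case less
  show ?case
  proof (cases "S = {}")
    case True
    then show ?thesis by (simp add: Phi_def cycs_def g0)
  next
    case False
    then obtain a where a: "a \<in> S" by auto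
    define n where "n = card S"
    have n1: "n \<ge> 1" using less.prems a n_def by (metis One_nat_def Suc_leI card_gt_0_iff empty_iff)
    have "(\<Sum>\<sigma>\<in>{\<sigma>. \<sigma> permutes S}. Phi w S \<sigma>) =
          (\<Sum>C\<in>{C. a \<in> C \<and> C \<subseteq> S}. real (card (Cyc a C)) * w (card C) * (\<Sum>\<tau>\<in>{\<tau>. \<tau> permutes (S - C)}. Phi w (S - C) \<tau>))"
      by (rule perm_decomp_sum[OF less.prems a])
    also have "\<dots> = (\<Sum>C\<in>{C. a \<in> C \<and> C \<subseteq> S}. fact (card C - 1) * w (card C) * (fact (n - card C) * g (n - card C)))"
    proof (rule sum.cong[OF refl])
      fix C assume "C \<in> {C. a \<in> C \<and> C \<subseteq> S}"
      then have C: "a \<in> C" "C \<subseteq> S" by auto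
      have fC: "finite C" using C less.prems by (meson finite_subset)
      have cd: "card (S - C) = n - card C" using C less.prems n_def by (meson card_Diff_subset fC)
      have "card C > 0" using fC C(1) card_gt_0_iff by blast
      then have "card (S - C) < card S" using cd n_def n1 by simp
      then have "(\<Sum>\<tau>\<in>{\<tau>. \<tau> permutes (S - C)}. Phi w (S - C) \<tau>) = fact (n - card C) * g (n - card C)"
        using less.hyps[of "S - C"] less.prems cd by simp
      moreover have "real (card (Cyc a C)) = fact (card C - 1)" using cyc_card[OF fC C(1)] by simp
      ultimately show "real (card (Cyc a C)) * w (card C) * (\<Sum>\<tau>\<in>{\<tau>. \<tau> permutes (S - C)}. Phi w (S - C) \<tau>) =
          fact (card C - 1) * w (card C) * (fact (n - card C) * g (n - card C))" by simp
    qed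
    also have "\<dots> = (\<Sum>j\<le>n - 1. real (n - 1 choose j) * (fact (j + 1 - 1) * w (j + 1) * (fact (n - (j + 1)) * g (n - (j + 1)))))"
      unfolding n_def by (rule sum_T_card[OF less.prems a, where f = "\<lambda>k. fact (k - 1) * w k * (fact (card S - k) * g (card S - k))"])
    also have "\<dots> = (\<Sum>j\<le>n - 1. fact (n - 1) * (w (j + 1) * g (n - (j + 1))))"
    proof (rule sum.cong[OF refl])
      fix j assume "j \<in> {..n - 1}"
      then have "j \<le> n - 1" by simp
      moreover have "n - (j + 1) = n - 1 - j" by simp
      ultimately show "real (n - 1 choose j) * (fact (j + 1 - 1) * w (j + 1) * (fact (n - (j + 1)) * g (n - (j + 1)))) =
          fact (n - 1) * (w (j + 1) * g (n - (j + 1)))"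
        using fact_split[of j "n - 1"] by (simp add: algebra_simps)
    qed
    also have "\<dots> = fact (n - 1) * (\<Sum>j\<le>n - 1. w (j + 1) * g (n - (j + 1)))" by (simp add: sum_distrib_left)
    also have "(\<Sum>j\<le>n - 1. w (j + 1) * g (n - (j + 1))) = (\<Sum>k=1..n. w k * g (n - k))"
    proof -
      have "(\<Sum>k=1..n. w k * g (n - k)) = (\<Sum>k=Suc 0..Suc (n - 1). w k * g (n - k))" using n1 by simp
      also have "\<dots> = (\<Sum>j=0..n - 1. w (Suc j) * g (n - Suc j))" by (rule sum.shift_bounds_cl_Suc_ivl)
      finally show ?thesis by (simp add: atLeast0AtMost)
    qed
    also have "(\<Sum>k=1..n. w k * g (n - k)) = real n * g n" using rec[OF n1] by simp
    also have "fact (n - 1) * (real n * g n) = fact n * g n"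
      using n1 by (metis (no_types, lifting) fact_num_eq_if mult.assoc not_one_le_zero of_nat_fact mult.commute of_nat_mult)
    finally show ?thesis unfolding n_def .
  qed
qed


definition Eg :: "real \<Rightarrow> real fps" where "Eg c = Abs_fps (\<lambda>n. c ^ n)"

definition Qf :: "nat \<Rightarrow> (nat \<Rightarrow> real) \<Rightarrow> real fps" where
  "Qf N x = (\<Prod>i<N. (1 + fps_const (x i) * fps_X) / (1 - fps_const (x i) * fps_X))"

definition Fs :: "nat \<Rightarrow> (nat \<Rightarrow> real) \<Rightarrow> nat \<Rightarrow> real" where
  "Fs N x k = (if odd k then 2 * psum N x k else 0)"

lemma SchurP_Qf: "SchurP N x k = Qf N x $ k / 2"
  by (simp add: SchurP_def Qf_def)

lemma Eg_inv: "(1 - fps_const c * fps_X) * Eg c = 1"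
proof (rule fps_ext)
  fix n
  show "((1 - fps_const c * fps_X) * Eg c) $ n = (1 :: real fps) $ n"
  proof (cases n)
    case 0 then show ?thesis by (simp add: Eg_def)
  next
    case (Suc k)
    have "(1 - fps_const c * fps_X) * Eg c = Eg c - fps_const c * (fps_X * Eg c)" by (simp add: algebra_simps)
    then show ?thesis using Suc by (simp add: Eg_def fps_X_mult_nth)
  qed
qed

lemma fac_eq: "(1 + fps_const c * fps_X) / (1 - fps_const c * fps_X) = (1 + fps_const c * fps_X) * Eg c"
proof -
  have "inverse (1 - fps_const c * fps_X) = Eg c" by (rule fps_inverse_unique[OF Eg_inv])
  then show ?thesis by (subst fps_divide_unit) auto
qed

lemma Eg_deriv: "fps_deriv (Eg c) = fps_const c * Eg c * Eg c"
proof (rule fps_ext)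
  fix n
  have "(Eg c * Eg c) $ n = (\<Sum>i=0..n. c ^ n)"
    unfolding fps_mult_nth Eg_def by (intro sum.cong refl) (simp add: power_add[symmetric])
  also have "\<dots> = real (n + 1) * c ^ n" by simp
  finally have "(Eg c * Eg c) $ n = real (n + 1) * c ^ n" .
  then show "fps_deriv (Eg c) $ n = (fps_const c * Eg c * Eg c) $ n"
    by (simp add: Eg_def mult.assoc)
qed

definition hc :: "real \<Rightarrow> real fps" where "hc c = fps_const c * (Eg c + Eg (- c))"

lemma fac_deriv: "fps_deriv ((1 + fps_const c * fps_X) * Eg c) = hc c * ((1 + fps_const c * fps_X) * Eg c)"
proof -
  have e: "1 - fps_const (- c) * fps_X = 1 + fps_const c * fps_X"
    by (simp del: fps_const_neg add: fps_const_neg[symmetric])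
  have h1: "(1 + fps_const c * fps_X) * Eg (- c) = 1" using Eg_inv[of "- c"] unfolding e .
  have "hc c * ((1 + fps_const c * fps_X) * Eg c) =
        fps_const c * Eg c * ((1 + fps_const c * fps_X) * Eg c) + fps_const c * Eg c * ((1 + fps_const c * fps_X) * Eg (- c))"
    by (simp add: hc_def algebra_simps)
  also have "\<dots> = fps_const c * Eg c * ((1 + fps_const c * fps_X) * Eg c) + fps_const c * Eg c" by (simp only: h1 mult_1_right)
  also have "\<dots> = fps_deriv ((1 + fps_const c * fps_X) * Eg c)" by (simp add: Eg_deriv algebra_simps)
  finally show ?thesis by simp
qed

lemma prod_deriv:
  fixes f h :: "'i \<Rightarrow> real fps"
  assumes "finite I" "\<And>i. i \<in> I \<Longrightarrow> fps_deriv (f i) = h i * f i"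
  shows "fps_deriv (\<Prod>i\<in>I. f i) = (\<Sum>i\<in>I. h i) * (\<Prod>i\<in>I. f i)"
  using assms
proof (induction I rule: finite_induct)
  case empty then show ?case by simp
next
  case (insert j I)
  then show ?case by (simp add: algebra_simps)
qed

lemma pow_deriv:
  fixes A H :: "real fps"
  assumes "fps_deriv A = H * A"
  shows "fps_deriv (A ^ k) = (of_nat k * H) * A ^ k"
proof (induction k)
  case 0 then show ?case by simp
next
  case (Suc k)
  then show ?case using assms by (simp add: algebra_simps)
qed

lemma hc_nth: "hc c $ j = c * (c ^ j + (- c) ^ j)"
  by (simp add: hc_def Eg_def)

lemma Qf_deriv: "fps_deriv (Qf N x) = (\<Sum>i<N. hc (x i)) * Qf N x"
  unfolding Qf_def fac_eq by (rule prod_deriv, simp, rule fac_deriv)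

lemma H_nth: "(\<Sum>i<N. hc (x i)) $ j = Fs N x (j + 1)"
proof -
  have "(\<Sum>i<N. hc (x i)) $ j = (\<Sum>i<N. x i * (x i ^ j + (- x i) ^ j))" by (simp add: fps_sum_nth hc_nth)
  also have "\<dots> = Fs N x (j + 1)"
  proof (cases "even j")
    case True
    then have "(\<Sum>i<N. x i * (x i ^ j + (- x i) ^ j)) = (\<Sum>i<N. 2 * x i ^ (j + 1))"
      by (intro sum.cong refl) (simp add: power_minus_even)
    then show ?thesis using True by (simp add: Fs_def psum_def sum_distrib_left)
  next
    case False
    then have "(\<Sum>i<N. x i * (x i ^ j + (- x i) ^ j)) = 0"
      by (simp add: power_minus_odd)
    then show ?thesis using False by (simp add: Fs_def)
  qed
  finally show ?thesis .
qed

lemma Qf_0: "Qf N x $ 0 = 1"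
proof -
  have "(\<Prod>i<N. (1 + fps_const (x i) * fps_X) * Eg (x i)) $ 0 = 1"
  proof (induction N)
    case 0 then show ?case by simp
  next
    case (Suc N) then show ?case by (simp add: Eg_def)
  qed
  then show ?thesis unfolding Qf_def fac_eq .
qed

lemma G_rec:
  assumes "m \<ge> 1"
  shows "real m * (Qf N x ^ (n+1)) $ m = (\<Sum>k=1..m. (real (n+1) * Fs N x k) * (Qf N x ^ (n+1)) $ (m - k))"
proof -
  define H where "H = (\<Sum>i<N. hc (x i))"
  define G where "G = Qf N x ^ (n+1)"
  have dG: "fps_deriv G = (of_nat (n+1) * H) * G" unfolding G_def H_def by (rule pow_deriv[OF Qf_deriv])
  have "real m * G $ m = fps_deriv G $ (m - 1)" using assms by simp
  also have "\<dots> = (fps_const (real (n+1)) * H * G) $ (m - 1)" unfolding dG by (simp only: fps_of_nat)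
  also have "\<dots> = (\<Sum>i=0..m-1. real (n+1) * Fs N x (i + 1) * G $ (m - 1 - i))"
  proof -
    have "(fps_const (real (n+1)) * H * G) $ (m - 1) = real (n+1) * (H * G) $ (m - 1)"
      by (simp only: mult.assoc fps_mult_left_const_nth)
    also have "\<dots> = (\<Sum>i=0..m-1. real (n+1) * Fs N x (i + 1) * G $ (m - 1 - i))"
      by (simp only: fps_mult_nth H_def H_nth sum_distrib_left mult.assoc)
    finally show ?thesis .
  qed
  also have "\<dots> = (\<Sum>k=Suc 0..Suc (m-1). real (n+1) * Fs N x k * G $ (m - k))"
    by (subst sum.shift_bounds_cl_Suc_ivl) simp
  also have "\<dots> = (\<Sum>k=1..m. real (n+1) * Fs N x k * G $ (m - k))" using assms by simp
  finally show ?thesis unfolding G_def .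
qed

lemma G_0: "(Qf N x ^ (n+1)) $ 0 = 1"
  by (simp add: fps_nth_power_0 Qf_0)


definition Comp' :: "nat \<Rightarrow> nat \<Rightarrow> nat list set" where
  "Comp' n l = {xs. length xs = l \<and> set xs \<subseteq> {1..} \<and> sum_list xs = n}"

definition Comp :: "nat \<Rightarrow> nat list set" where
  "Comp n = {xs. set xs \<subseteq> {1..} \<and> sum_list xs = n}"

lemma sum_list_ge_length: "set xs \<subseteq> {1..} \<Longrightarrow> length xs \<le> sum_list (xs :: nat list)"
  by (induction xs) auto

lemma Comp_fin: "finite (Comp n)"
proof (rule finite_subset)
  show "Comp n \<subseteq> {xs. set xs \<subseteq> {..n} \<and> length xs \<le> n}"
    unfolding Comp_def using sum_list_ge_length member_le_sum_list by fastforce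
  show "finite {xs. set xs \<subseteq> {..n} \<and> length xs \<le> n}" by (rule finite_lists_length_le) simp
qed

lemma Comp'_fin: "finite (Comp' n l)"
  by (rule finite_subset[OF _ Comp_fin[of n]]) (auto simp: Comp'_def Comp_def)

lemma power_comp:
  fixes A :: "real fps"
  assumes A0: "A $ 0 = 0"
  shows "(A ^ l) $ n = (\<Sum>xs\<in>Comp' n l. prod_list (map (\<lambda>k. A $ k) xs))"
proof (induction l arbitrary: n)
  case 0
  show ?case
  proof (cases "n = 0")
    case True
    then have "Comp' n 0 = {[]}" by (auto simp: Comp'_def)
    then show ?thesis using True by simp
  next
    case False
    then have "Comp' n 0 = {}" by (auto simp: Comp'_def)
    then show ?thesis using False by simp
  qed
next
  case (Suc l)
  have "(A ^ Suc l) $ n = (\<Sum>i=0..n. A $ i * (A ^ l) $ (n - i))" by (simp add: fps_mult_nth)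
  also have "\<dots> = (\<Sum>i\<in>{1..n}. A $ i * (A ^ l) $ (n - i))"
  proof -
    have "{0..n} = insert 0 {1..n}" by auto
    then show ?thesis using A0 by simp
  qed
  also have "\<dots> = (\<Sum>i\<in>{1..n}. \<Sum>ys\<in>Comp' (n - i) l. A $ i * prod_list (map (\<lambda>k. A $ k) ys))"
    by (simp add: Suc sum_distrib_left)
  also have "\<dots> = (\<Sum>p\<in>Sigma {1..n} (\<lambda>i. Comp' (n - i) l). A $ fst p * prod_list (map (\<lambda>k. A $ k) (snd p)))"
    by (subst sum.Sigma) (auto simp: Comp'_fin split_def)
  also have "\<dots> = (\<Sum>xs\<in>(\<lambda>p. fst p # snd p) ` Sigma {1..n} (\<lambda>i. Comp' (n - i) l). prod_list (map (\<lambda>k. A $ k) xs))"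
    by (subst sum.reindex) (auto simp: inj_on_def)
  also have "(\<lambda>p. fst p # snd p) ` Sigma {1..n} (\<lambda>i. Comp' (n - i) l) = Comp' n (Suc l)"
  proof (intro set_eqI iffI)
    fix xs assume "xs \<in> (\<lambda>p. fst p # snd p) ` Sigma {1..n} (\<lambda>i. Comp' (n - i) l)"
    then show "xs \<in> Comp' n (Suc l)" by (auto simp: Comp'_def)
  next
    fix xs assume xs: "xs \<in> Comp' n (Suc l)"
    then obtain i ys where e: "xs = i # ys" unfolding Comp'_def by (cases xs) auto
    have "i \<ge> 1" "i + sum_list ys = n" "length ys = l" "set ys \<subseteq> {1..}" using xs e by (auto simp: Comp'_def)
    then have "(i, ys) \<in> Sigma {1..n} (\<lambda>i. Comp' (n - i) l)" by (auto simp: Comp'_def)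
    then show "xs \<in> (\<lambda>p. fst p # snd p) ` Sigma {1..n} (\<lambda>i. Comp' (n - i) l)" using e by force
  qed
  finally show ?case .
qed

lemma prod_desc:
  assumes "k \<le> n"
  shows "(\<Prod>j<k. real (n - j)) = fact n / fact (n - k)"
  using assms
proof (induction k)
  case 0 then show ?case by simp
next
  case (Suc k)
  define a where "a = real (n - k)"
  define F where "F = (fact (n - Suc k) :: real)"
  have h: "fact (n - k) = a * F" unfolding a_def F_def
    using Suc.prems by (metis Suc_diff_Suc Suc_le_lessD fact_Suc of_nat_fact of_nat_mult)
  have a0: "a \<noteq> 0" using Suc.prems unfolding a_def by simp
  have F0: "F \<noteq> 0" unfolding F_def by simp
  have "(\<Prod>j<Suc k. real (n - j)) = (\<Prod>j<k. real (n - j)) * a" unfolding a_def by (simp only: prod.lessThan_Suc)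
  also have "\<dots> = fact n / fact (n - k) * a" using Suc by simp
  also have "\<dots> = fact n / F" unfolding h using a0 F0 by (simp add: field_simps)
  finally show ?case unfolding F_def .
qed

lemma coef_eq:
  assumes "1 \<le> l" "l \<le> n + 1"
  shows "(\<Prod>j<l - 1. real (n - j)) / fact l = real (n + 1 choose l) / real (n + 1)"
proof -
  define F1 where "F1 = (fact n :: real)"
  define F2 where "F2 = (fact (n + 1 - l) :: real)"
  define F3 where "F3 = (fact l :: real)"
  define r where "r = real (n + 1)"
  have nz: "F1 \<noteq> 0" "F2 \<noteq> 0" "F3 \<noteq> 0" "r \<noteq> 0" unfolding F1_def F2_def F3_def r_def by auto
  have P: "(\<Prod>j<l - 1. real (n - j)) = F1 / F2"
    using prod_desc[of "l - 1" n] assms unfolding F1_def F2_def by (simp add: Suc_diff_le)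
  moreover have C: "real (n + 1 choose l) = r * F1 / (F3 * F2)"
  proof -
    have "real (n + 1 choose l) = fact (n+1) / (fact l * fact (n + 1 - l))"
      by (rule binomial_fact[OF assms(2)])
    moreover have "(fact (n+1) :: real) = r * F1" unfolding r_def F1_def by (simp add: algebra_simps)
    ultimately show ?thesis unfolding F2_def F3_def by simp
  qed
  ultimately have "(\<Prod>j<l - 1. real (n - j)) / F3 = real (n + 1 choose l) / r"
    using nz by (simp only: P C) (simp add: field_simps)
  then show ?thesis unfolding F3_def r_def .
qed

lemma prod_mset_half:
  "(\<Prod>k\<in>#M. (f k / 2 :: real)) = (\<Prod>k\<in>#M. f k) / 2 ^ size M"
  by (induction M) (auto simp: field_simps)

lemma partitions_sub: "partitions n \<subseteq> mset ` Comp n"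
proof
  fix la assume la: "la \<in> partitions n"
  obtain xs where xs: "mset xs = la" using ex_mset by blast
  have "set xs \<subseteq> {1..}" "sum_list xs = n" using la xs
    by (auto simp: partitions_def sum_mset_sum_list[symmetric])
  then show "la \<in> mset ` Comp n" using xs by (auto simp: Comp_def)
qed

lemma partitions_fin: "finite (partitions n)"
  using finite_subset[OF partitions_sub] Comp_fin by blast

lemma RHS_eq:
  assumes n1: "n \<ge> 1"
  shows "(\<Sum>la\<in>partitions n.
       (2 ^ size la * (\<Prod>j<size la - 1. real (n - j)) /
        (\<Prod>i\<in>{1..n}. fact (count la i))) * V N x la) = (Qf N x ^ (n+1)) $ n / real (n + 1)"
proof -
  define q where "q k = Qf N x $ k" for k
  define c where "c l = (\<Prod>j<l - 1. real (n - j)) / fact l" for l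
  define Gm where "Gm = Qf N x - 1"
  define T where "T l = (Gm ^ l) $ n" for l
  have Gm0: "Gm $ 0 = 0" by (simp add: Gm_def Qf_0)
  have Gmq: "k \<ge> 1 \<Longrightarrow> Gm $ k = q k" for k by (simp add: Gm_def q_def)
  have trm: "(2 ^ size la * (\<Prod>j<size la - 1. real (n - j)) / (\<Prod>i\<in>{1..n}. fact (count la i))) * V N x la
      = (\<Sum>xs\<in>permutations_of_multiset la. c (length xs) * prod_list (map q xs))" if la: "la \<in> partitions n" for la
  proof -
    have setla: "set_mset la \<subseteq> {1..n}"
    proof
      fix k assume k: "k \<in># la"
      have "k \<le> sum_mset la" using sum_mset.remove[OF k] by simp
      then show "k \<in> {1..n}" using la k by (auto simp: partitions_def)
    qed
    have pf: "(\<Prod>i\<in>{1..n}. fact (count la i)) = (\<Prod>i\<in>set_mset la. fact (count la i) :: real)"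
      by (rule prod.mono_neutral_right) (use setla in \<open>auto simp: not_in_iff\<close>)
    have cardp: "real (card (permutations_of_multiset la)) = fact (size la) / (\<Prod>i\<in>set_mset la. fact (count la i))"
    proof -
      have "real (card (permutations_of_multiset la)) = real (fact (size la) div (\<Prod>x\<in>set_mset la. fact (count la x)))"
        by (simp add: card_permutations_of_multiset)
      also have "\<dots> = real (fact (size la)) / real (\<Prod>x\<in>set_mset la. fact (count la x))"
        by (rule real_of_nat_div) (rule card_permutations_of_multiset(2))
      finally show ?thesis by (simp add: of_nat_prod)
    qed
    have V: "V N x la = (\<Prod>k\<in>#la. q k) / 2 ^ size la"
      unfolding V_def SchurP_Qf q_def by (rule prod_mset_half)
    have sumx: "(\<Sum>xs\<in>permutations_of_multiset la. c (length xs) * prod_list (map q xs))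
        = real (card (permutations_of_multiset la)) * (c (size la) * (\<Prod>k\<in>#la. q k))"
    proof -
      have "(\<Sum>xs\<in>permutations_of_multiset la. c (length xs) * prod_list (map q xs))
          = (\<Sum>xs\<in>permutations_of_multiset la. c (size la) * (\<Prod>k\<in>#la. q k))"
      proof (rule sum.cong[OF refl])
        fix xs assume "xs \<in> permutations_of_multiset la"
        then have m: "mset xs = la" by (simp add: permutations_of_multiset_def)
        have "prod_list (map q xs) = (\<Prod>k\<in>#la. q k)"
          by (metis m mset_map prod_mset_prod_list)
        moreover have "length xs = size la" using m by (metis size_mset)
        ultimately show "c (length xs) * prod_list (map q xs) = c (size la) * (\<Prod>k\<in>#la. q k)" by simp
      qed
      then show ?thesis by simp
    qed
    have nz: "(\<Prod>i\<in>set_mset la. fact (count la i) :: real) \<noteq> 0" by simp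
    show ?thesis unfolding sumx unfolding cardp V pf c_def using nz by (simp add: field_simps)
  qed
  have "(\<Sum>la\<in>partitions n.
       (2 ^ size la * (\<Prod>j<size la - 1. real (n - j)) /
        (\<Prod>i\<in>{1..n}. fact (count la i))) * V N x la)
      = (\<Sum>la\<in>partitions n. \<Sum>xs\<in>permutations_of_multiset la. c (length xs) * prod_list (map q xs))"
    using trm by (rule sum.cong[OF refl])
  also have "\<dots> = (\<Sum>la\<in>partitions n. \<Sum>xs\<in>{xs \<in> Comp n. mset xs = la}. c (length xs) * prod_list (map q xs))"
  proof (rule sum.cong[OF refl])
    fix la assume la: "la \<in> partitions n"
    have "permutations_of_multiset la = {xs \<in> Comp n. mset xs = la}"
      using la by (auto simp: permutations_of_multiset_def Comp_def partitions_def sum_mset_sum_list[symmetric])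
    then show "(\<Sum>xs\<in>permutations_of_multiset la. c (length xs) * prod_list (map q xs)) =
        (\<Sum>xs\<in>{xs \<in> Comp n. mset xs = la}. c (length xs) * prod_list (map q xs))" by simp
  qed
  also have "\<dots> = (\<Sum>xs\<in>Comp n. c (length xs) * prod_list (map q xs))"
  proof (rule sum.group)
    show "finite (Comp n)" by (rule Comp_fin)
    show "finite (partitions n)" by (rule partitions_fin)
    show "mset ` Comp n \<subseteq> partitions n"
      by (auto simp: Comp_def partitions_def sum_mset_sum_list)
  qed
  also have "\<dots> = (\<Sum>l\<in>{..n}. \<Sum>xs\<in>{xs \<in> Comp n. length xs = l}. c (length xs) * prod_list (map q xs))"
  proof (rule sum.group[symmetric])
    show "finite (Comp n)" by (rule Comp_fin)
    show "finite {..n}" by simp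
    show "length ` Comp n \<subseteq> {..n}" using sum_list_ge_length by (auto simp: Comp_def)
  qed
  also have "\<dots> = (\<Sum>l\<le>n. c l * T l)"
  proof (rule sum.cong[OF refl])
    fix l assume "l \<in> {..n}"
    have eqs: "{xs \<in> Comp n. length xs = l} = Comp' n l" by (auto simp: Comp_def Comp'_def)
    have "(\<Sum>xs\<in>Comp' n l. c (length xs) * prod_list (map q xs)) = (\<Sum>xs\<in>Comp' n l. c l * prod_list (map (\<lambda>k. Gm $ k) xs))"
    proof (rule sum.cong[OF refl])
      fix xs assume xs: "xs \<in> Comp' n l"
      then have mq: "map q xs = map (\<lambda>k. Gm $ k) xs" using Gmq by (auto simp: Comp'_def)
      have ll: "length xs = l" using xs by (simp add: Comp'_def)
      show "c (length xs) * prod_list (map q xs) = c l * prod_list (map (\<lambda>k. Gm $ k) xs)"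
        by (simp only: mq ll)
    qed
    also have "\<dots> = c l * T l" unfolding T_def power_comp[OF Gm0] by (simp add: sum_distrib_left)
    finally show "(\<Sum>xs\<in>{xs \<in> Comp n. length xs = l}. c (length xs) * prod_list (map q xs)) = c l * T l"
      unfolding eqs .
  qed
  also have "\<dots> = (\<Sum>l\<le>n+1. real (n + 1 choose l) * T l) / real (n + 1)"
  proof -
    have Tn1: "T (n+1) = 0"
    proof -
      have "Comp' n (n+1) = {}" using sum_list_ge_length by (fastforce simp: Comp'_def)
      then show ?thesis unfolding T_def power_comp[OF Gm0] by simp
    qed
    have T0: "T 0 = 0" using n1 by (simp add: T_def)
    have "(\<Sum>l\<le>n+1. real (n + 1 choose l) * T l) = (\<Sum>l\<le>n. real (n + 1 choose l) * T l)"
      using Tn1 by simp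
    also have "\<dots> = (\<Sum>l\<le>n. real (n + 1) * (c l * T l))"
    proof (rule sum.cong[OF refl])
      fix l assume l: "l \<in> {..n}"
      show "real (n + 1 choose l) * T l = real (n + 1) * (c l * T l)"
      proof (cases "l = 0")
        case True then show ?thesis using T0 by simp
      next
        case False
        then have "c l = real (n + 1 choose l) / real (n + 1)" unfolding c_def using l by (intro coef_eq) auto
        then show ?thesis by simp
      qed
    qed
    finally show ?thesis by (simp add: sum_distrib_left[symmetric])
  qed
  also have "(\<Sum>l\<le>n+1. real (n + 1 choose l) * T l) = (Qf N x ^ (n+1)) $ n"
  proof -
    have "Qf N x ^ (n+1) = (Gm + 1) ^ (n+1)" by (simp add: Gm_def)
    also have "\<dots> = (\<Sum>l\<le>n+1. of_nat (n + 1 choose l) * Gm ^ l * 1 ^ (n + 1 - l))" by (rule binomial_ring)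
    finally have "(Qf N x ^ (n+1)) $ n = (\<Sum>l\<le>n+1. (of_nat (n + 1 choose l) * Gm ^ l) $ n)"
      by (simp add: fps_sum_nth)
    also have "\<dots> = (\<Sum>l\<le>n+1. real (n + 1 choose l) * T l)"
      by (intro sum.cong refl) (simp only: T_def fps_of_nat[symmetric] fps_mult_left_const_nth)
    finally show ?thesis by simp
  qed
  finally show ?thesis .
qed


lemma orb_const:
  assumes fx0: "\<forall>i<n. a ! (\<sigma> i) = a ! i" and \<sigma>: "\<sigma> permutes {0..<n}" and i: "i < n"
  shows "y \<in> orbit \<sigma> i \<Longrightarrow> a ! y = a ! i"
proof (induction rule: orbit.induct)
  case base then show ?case using fx0 i by simp
next
  case (step y)
  have "y < n" using orb_sub[OF \<sigma>, of i] i step.hyps by auto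
  then show ?case using fx0 step.IH by simp
qed

lemma card_fixset:
  assumes \<sigma>: "\<sigma> permutes {0..<n}"
  shows "card (fixset n \<sigma>) = (n + 1) ^ card (cycs \<sigma> {0..<n})"
proof -
  define K where "K = cycs \<sigma> {0..<n}"
  define V where "V = {1..n+1}"
  define g where "g \<phi> = map (\<lambda>i. \<phi> (orbit \<sigma> i)) [0..<n]" for \<phi> :: "nat set \<Rightarrow> nat"
  have fin: "finite {0..<n::nat}" by simp
  have finK: "finite K" unfolding K_def cycs_def by simp
  have inj: "inj_on g (PiE K (\<lambda>_. V))"
  proof (rule inj_onI)
    fix \<phi> \<psi> assume \<phi>: "\<phi> \<in> PiE K (\<lambda>_. V)" and \<psi>: "\<psi> \<in> PiE K (\<lambda>_. V)" and e: "g \<phi> = g \<psi>"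
    have "\<forall>c\<in>K. \<phi> c = \<psi> c"
    proof
      fix c assume "c \<in> K"
      then obtain i where i: "i < n" "c = orbit \<sigma> i" unfolding K_def cycs_def by auto
      have "g \<phi> ! i = g \<psi> ! i" using e by simp
      then show "\<phi> c = \<psi> c" using i by (simp add: g_def)
    qed
    then show "\<phi> = \<psi>" using PiE_ext[OF \<phi> \<psi>] by blast
  qed
  have img: "g ` PiE K (\<lambda>_. V) = fixset n \<sigma>"
  proof (intro set_eqI iffI)
    fix a assume "a \<in> g ` PiE K (\<lambda>_. V)"
    then obtain \<phi> where \<phi>: "\<phi> \<in> PiE K (\<lambda>_. V)" "a = g \<phi>" by auto
    have len: "length a = n" using \<phi> by (simp add: g_def)
    have vals: "set a \<subseteq> V"
    proof
      fix v assume "v \<in> set a"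
      then obtain i where "i < n" "v = \<phi> (orbit \<sigma> i)" using \<phi>(2) by (auto simp: g_def)
      moreover have "orbit \<sigma> i \<in> K" using \<open>i < n\<close> unfolding K_def cycs_def by auto
      ultimately show "v \<in> V" using \<phi>(1) by auto
    qed
    have "a ! (\<sigma> i) = a ! i" if i: "i < n" for i
    proof -
      have si: "\<sigma> i < n" using permutes_in_image[OF \<sigma>] i by auto
      have "orbit \<sigma> (\<sigma> i) = orbit \<sigma> i" by (rule orb_eq[OF \<sigma> fin]) (rule orbit.base)
      then show ?thesis using \<phi>(2) i si by (simp add: g_def)
    qed
    then show "a \<in> fixset n \<sigma>" using len vals unfolding fixset_def V_def by auto
  next
    fix a assume a: "a \<in> fixset n \<sigma>"
    then have len: "length a = n" and vals: "set a \<subseteq> V" and fx: "\<forall>i<n. a ! (\<sigma> i) = a ! i"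
      unfolding fixset_def V_def by auto
    define \<phi> where "\<phi> = (\<lambda>c\<in>K. a ! (SOME j. j \<in> c))"
    have key: "\<phi> (orbit \<sigma> i) = a ! i" if i: "i < n" for i
    proof -
      have inK: "orbit \<sigma> i \<in> K" using i unfolding K_def cycs_def by auto
      have "i \<in> orbit \<sigma> i" by (rule orb_self[OF \<sigma> fin])
      then have "(SOME j. j \<in> orbit \<sigma> i) \<in> orbit \<sigma> i" by (rule someI)
      then have "a ! (SOME j. j \<in> orbit \<sigma> i) = a ! i" by (rule orb_const[OF fx \<sigma> i])
      then show ?thesis using inK by (simp add: \<phi>_def)
    qed
    have "\<phi> \<in> PiE K (\<lambda>_. V)"
    proof
      fix c assume c: "c \<in> K"
      then obtain i where i: "i < n" "c = orbit \<sigma> i" unfolding K_def cycs_def by auto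
      have "a ! i \<in> V" using vals len i by (auto simp: subset_iff)
      then show "\<phi> c \<in> V" using key[OF i(1)] i by simp
    next
      fix c assume "c \<notin> K" then show "\<phi> c = undefined" by (simp add: \<phi>_def)
    qed
    moreover have "g \<phi> = a" using len key by (intro nth_equalityI) (auto simp: g_def)
    ultimately show "a \<in> g ` PiE K (\<lambda>_. V)" by blast
  qed
  have "card (fixset n \<sigma>) = card (PiE K (\<lambda>_. V))" using card_image[OF inj] img by simp
  also have "\<dots> = (n + 1) ^ card K" using finK by (simp add: card_PiE V_def)
  finally show ?thesis unfolding K_def .
qed

lemma cycs_Union:
  assumes \<sigma>: "\<sigma> permutes S" and fin: "finite S"
  shows "\<Union>(cycs \<sigma> S) = S"
  using orb_sub[OF \<sigma>] orb_self[OF \<sigma> fin] unfolding cycs_def by blast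

lemma cycs_disj:
  assumes \<sigma>: "\<sigma> permutes S" and fin: "finite S"
  shows "pairwise disjnt (cycs \<sigma> S)"
proof (rule pairwiseI)
  fix c d assume c: "c \<in> cycs \<sigma> S" and d: "d \<in> cycs \<sigma> S" and ne: "c \<noteq> d"
  obtain i j where "c = orbit \<sigma> i" "d = orbit \<sigma> j" using c d unfolding cycs_def by auto
  then show "disjnt c d" using ne orb_eq[OF \<sigma> fin] unfolding disjnt_def by blast
qed

lemma cycle_type_eq: "cycle_type n \<sigma> = image_mset card (mset_set (cycs \<sigma> {0..<n}))"
proof -
  have "{orbit \<sigma> i | i. i < n} = cycs \<sigma> {0..<n}" unfolding cycs_def by auto
  then show ?thesis unfolding cycle_type_def by simp
qed

lemma cycle_type_part:
  assumes \<sigma>: "\<sigma> permutes {0..<n}"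
  shows "cycle_type n \<sigma> \<in> partitions n"
proof -
  define K where "K = cycs \<sigma> {0..<n}"
  have fin: "finite {0..<n::nat}" by simp
  have finK: "finite K" unfolding K_def cycs_def by simp
  have pos: "set_mset (cycle_type n \<sigma>) \<subseteq> {1..}"
  proof
    fix k assume "k \<in># cycle_type n \<sigma>"
    then obtain c where c: "c \<in> K" "k = card c" using finK unfolding cycle_type_eq K_def by auto
    then obtain i where "c = orbit \<sigma> i" unfolding K_def cycs_def by auto
    then have "finite c" "c \<noteq> {}" using orb_fin[OF \<sigma> fin, of i] orbit_nonempty[of \<sigma> i] by auto
    then show "k \<in> {1..}" using c by (simp add: Suc_le_eq card_gt_0_iff)
  qed
  have "sum_mset (cycle_type n \<sigma>) = sum card K" unfolding cycle_type_eq K_def by (simp add: sum_unfold_sum_mset)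
  also have "\<dots> = card (\<Union>K)"
    by (rule card_Union_disjoint[symmetric]) (use cycs_disj[OF \<sigma> fin] orb_fin[OF \<sigma> fin] in \<open>auto simp: K_def cycs_def\<close>)
  also have "\<dots> = n" unfolding K_def cycs_Union[OF \<sigma> fin] by simp
  finally show ?thesis using pos unfolding partitions_def by auto
qed

lemma pf_fix_eq:
  assumes \<sigma>: "\<sigma> permutes {0..<n}" and n1: "n \<ge> 1"
  shows "real (pf_fix n \<sigma>) * real (n + 1) = real (n + 1) ^ card (cycs \<sigma> {0..<n})"
proof -
  have "\<forall>i<n. \<sigma> i < n" using permutes_in_image[OF \<sigma>] by auto
  then have "(n+1) * pf_fix n \<sigma> = (n + 1) ^ card (cycs \<sigma> {0..<n})"
    using pf_fix_times card_fixset[OF \<sigma>] by simp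
  then have "real ((n+1) * pf_fix n \<sigma>) = real ((n + 1) ^ card (cycs \<sigma> {0..<n}))" by simp
  then show ?thesis by (simp add: algebra_simps)
qed

lemma LHS_eq:
  assumes n1: "n \<ge> 1"
  shows "SH n N x = (Qf N x ^ (n+1)) $ n / real (n + 1)"
proof -
  define S where "S = {0..<n::nat}"
  define Perm where "Perm = {\<sigma>. \<sigma> permutes S}"
  define w where "w k = real (n+1) * Fs N x k" for k
  define g where "g m = (Qf N x ^ (n+1)) $ m" for m
  have finS: "finite S" unfolding S_def by simp
  have finP: "finite Perm" unfolding Perm_def using finite_permutations[OF finS] .
  have ps: "pmono_shift N x \<mu> = (\<Prod>k\<in>#\<mu>. Fs N x k)" for \<mu>
    unfolding pmono_shift_def Fs_def by simp
  have each: "real (pf_fix n \<sigma>) * pmono_shift N x (cycle_type n \<sigma>) = Phi w S \<sigma> / real (n + 1)"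
    if \<sigma>: "\<sigma> \<in> Perm" for \<sigma>
  proof -
    have \<sigma>p: "\<sigma> permutes {0..<n}" using \<sigma> unfolding Perm_def S_def by simp
    define K where "K = cycs \<sigma> {0..<n}"
    have finK: "finite K" unfolding K_def cycs_def by simp
    have pm: "pmono_shift N x (cycle_type n \<sigma>) = (\<Prod>c\<in>K. Fs N x (card c))"
      unfolding ps cycle_type_eq K_def by (simp add: prod_unfold_prod_mset image_mset.compositionality o_def)
    have ph: "Phi w S \<sigma> = real (n + 1) ^ card K * (\<Prod>c\<in>K. Fs N x (card c))"
      unfolding Phi_def w_def K_def S_def by (simp add: prod.distrib)
    have pf: "real (pf_fix n \<sigma>) * real (n + 1) = real (n + 1) ^ card K"
      unfolding K_def by (rule pf_fix_eq[OF \<sigma>p n1])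
    have "Phi w S \<sigma> = (real (pf_fix n \<sigma>) * real (n + 1)) * (\<Prod>c\<in>K. Fs N x (card c))"
      unfolding ph pf ..
    then have "Phi w S \<sigma> / real (n + 1) = real (pf_fix n \<sigma>) * (\<Prod>c\<in>K. Fs N x (card c))"
      by (simp del: of_nat_add of_nat_Suc)
    then show ?thesis unfolding pm by simp
  qed
  have "SH n N x = (\<Sum>\<mu>\<in>partitions n. (\<Sum>\<sigma>\<in>{\<sigma> \<in> Perm. cycle_type n \<sigma> = \<mu>}. real (pf_fix n \<sigma>) * pmono_shift N x (cycle_type n \<sigma>)) / fact n)"
    unfolding SH_def PF_coeff_def
  proof (rule sum.cong[OF refl])
    fix \<mu> assume "\<mu> \<in> partitions n"
    have e: "{\<sigma>. \<sigma> permutes {0..<n} \<and> cycle_type n \<sigma> = \<mu>} = {\<sigma> \<in> Perm. cycle_type n \<sigma> = \<mu>}"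
      unfolding Perm_def S_def by auto
    have "(\<Sum>\<sigma>\<in>{\<sigma> \<in> Perm. cycle_type n \<sigma> = \<mu>}. real (pf_fix n \<sigma>) * pmono_shift N x (cycle_type n \<sigma>))
        = (\<Sum>\<sigma>\<in>{\<sigma> \<in> Perm. cycle_type n \<sigma> = \<mu>}. real (pf_fix n \<sigma>)) * pmono_shift N x \<mu>"
      by (simp add: sum_distrib_right)
    then show "(\<Sum>\<sigma>\<in>{\<sigma>. \<sigma> permutes {0..<n} \<and> cycle_type n \<sigma> = \<mu>}. real (pf_fix n \<sigma>)) / fact n * pmono_shift N x \<mu> =
         (\<Sum>\<sigma>\<in>{\<sigma> \<in> Perm. cycle_type n \<sigma> = \<mu>}. real (pf_fix n \<sigma>) * pmono_shift N x (cycle_type n \<sigma>)) / fact n"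
      unfolding e by simp
  qed
  also have "\<dots> = (\<Sum>\<mu>\<in>partitions n. \<Sum>\<sigma>\<in>{\<sigma> \<in> Perm. cycle_type n \<sigma> = \<mu>}. real (pf_fix n \<sigma>) * pmono_shift N x (cycle_type n \<sigma>)) / fact n"
    by (simp add: sum_divide_distrib)
  also have "(\<Sum>\<mu>\<in>partitions n. \<Sum>\<sigma>\<in>{\<sigma> \<in> Perm. cycle_type n \<sigma> = \<mu>}. real (pf_fix n \<sigma>) * pmono_shift N x (cycle_type n \<sigma>))
      = (\<Sum>\<sigma>\<in>Perm. real (pf_fix n \<sigma>) * pmono_shift N x (cycle_type n \<sigma>))"
  proof (rule sum.group)
    show "finite Perm" by (rule finP)
    show "finite (partitions n)" by (rule partitions_fin)
    show "cycle_type n ` Perm \<subseteq> partitions n" using cycle_type_part unfolding Perm_def S_def by auto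
  qed
  also have "\<dots> = (\<Sum>\<sigma>\<in>Perm. Phi w S \<sigma>) / real (n + 1)"
    using each by (simp add: sum_divide_distrib)
  also have "(\<Sum>\<sigma>\<in>Perm. Phi w S \<sigma>) = fact (card S) * g (card S)"
    unfolding Perm_def
  proof (rule exp_formula[OF _ _ finS])
    show "g 0 = 1" unfolding g_def by (rule G_0)
    show "\<And>m. 1 \<le> m \<Longrightarrow> real m * g m = (\<Sum>k = 1..m. w k * g (m - k))"
      unfolding g_def w_def by (rule G_rec)
  qed
  also have "card S = n" unfolding S_def by simp
  finally show ?thesis unfolding g_def by simp
qed

theorem mainTheorem5:
  fixes n N :: nat and x :: "nat \<Rightarrow> real"
  assumes "n \<ge> 1"
  shows "SH n N x =
    (\<Sum>la\<in>partitions n.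
       (2 ^ size la * (\<Prod>j<size la - 1. real (n - j)) /
        (\<Prod>i\<in>{1..n}. fact (count la i))) * V N x la)"
  using LHS_eq[OF assms] RHS_eq[OF assms] by simp

end
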